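(* Let $\kappa=[2\ell]$ for some $\ell\in\mathbb Z$, let $t=F+\check E+\kappa K^{-1}\in\mathbf U$, and define for $a\ge0$ $$\dot t^{(2a)}=\frac{1}{[2a]!}\prod_{j=-a+1}^{a}\bigl(t-[2j-1]\bigr),\qquad \dot t^{(2a+1)}=\frac{t}{[2a+1]!}\prod_{j=-a+1}^{a}\bigl(t-[2j-1]\bigr).$$ Then for every $m\ge 0$, in $\mathbf U$, $$\dot t^{(2m)}=\sum_{b=0}^{2m}\sum_{a=0}^{b}\sum_{c\ge0} q^{\binom{2c}{2}-b(2m-b-2c)-a(b-a)}\,p^{(2m-b-2c)}(\kappa)\;\check E^{(a)}\Bigl\{\begin{matrix}h;1-m\\ c\end{matrix}\Bigr\}K^{b-2m+2c}F^{(b-a)},$$ $$\dot t^{(2m+1)}=\sum_{b=0}^{2m+1}\sum_{a=0}^{b}\sum_{c\ge0} q^{\binom{2c}{2}-2c-b(2m-b-2c+1)-a(b-a)}\,p^{(2m-b-2c+1)}(\kappa)\;\check E^{(a)}\Bigl\{\begin{matrix}h;1-m\\ c\end{matrix}\Bigr\}K^{b-2m+2c-1}F^{(b-a)}.$$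
   Context: $q$ is an indeterminate, $[n]=\frac{q^n-q^{-n}}{q-q^{-1}}$ for $n\in\mathbb Z$, $[n]!=[1]\cdots[n]$, $[0]!=1$. $\mathbf U$ is the $\mathbb Q(q)$-algebra generated by $E,F,K^{\pm1}$ with relations $KK^{-1}=K^{-1}K=1$, $EF-FE=\frac{K-K^{-1}}{q-q^{-1}}$, $KE=q^2EK$, $KF=q^{-2}FK$. Put $\check E=q^{-1}EK^{-1}$, $\check E^{(n)}=\check E^n/[n]!$, $F^{(n)}=F^n/[n]!$. For $a\in\mathbb Z$, $n\in\mathbb N$: $\Bigl\{\begin{matrix}h;a\\ n\end{matrix}\Bigr\}=\prod_{i=1}^{n}\frac{q^{4a+4i-4}K^{-2}-q^2}{q^{4i}-1}$ (equal to $1$ for $n=0$). The polynomials $p_n(x)$ are defined by $p_0=1$, $p_n=0$ for $n<0$, $p_{n+1}=x\,p_n+q^{1-2n}[n][n-1]p_{n-1}$ ($n\ge0$); $p^{(n)}=p_n/[n]!$ for $n\ge0$ and $p^{(n)}=0$ for $n<0$. *)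

theory Defs
  imports "HOL-Computational_Algebra.Polynomial" "HOL-Computational_Algebra.Fraction_Field"
begin

type_synonym qf = "rat poly fract"

definition qq :: qf where "qq = Fract [:0, 1:] 1"

definition qint :: "int \<Rightarrow> qf" where
  "qint n = (qq powi n - qq powi (- n)) / (qq - inverse qq)"

definition qfact :: "nat \<Rightarrow> qf" where
  "qfact n = (\<Prod>i\<in>{1..n}. qint (int i))"

fun pp :: "nat \<Rightarrow> qf \<Rightarrow> qf" where
  "pp 0 x = 1"
| "pp (Suc 0) x = x"
| "pp (Suc (Suc n)) x = x * pp (Suc n) x
      + qq powi (1 - 2 * (int n + 1)) * qint (int n + 1) * qint (int n) * pp n x"

definition pdiv :: "int \<Rightarrow> qf \<Rightarrow> qf" where
  "pdiv n x = (if n < 0 then 0 else pp (nat n) x / qfact (nat n))"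

text \<open>A representation of the defining presentation of U in a ring A:
  phi makes A a Q(q)-algebra (a unital ring homomorphism into the centre of A),
  and E, F, K, Ki satisfy the defining relations of U (Ki playing the role of K^-1).
  Since U is the Q(q)-algebra given by these generators and relations, an identity
  in the generators holds in U iff it holds for every such datum.\<close>
definition U_rep :: "(qf \<Rightarrow> 'a::ring_1) \<Rightarrow> 'a \<Rightarrow> 'a \<Rightarrow> 'a \<Rightarrow> 'a \<Rightarrow> bool" where
  "U_rep phi E F K Ki \<longleftrightarrow>
     (\<forall>x y. phi (x + y) = phi x + phi y) \<and>
     (\<forall>x y. phi (x * y) = phi x * phi y) \<and>
     phi 1 = 1 \<and>
     (\<forall>x z. phi x * z = z * phi x) \<and>
     K * Ki = 1 \<and> Ki * K = 1 \<and>
     E * F - F * E = phi (inverse (qq - inverse qq)) * (K - Ki) \<and>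
     K * E = phi (qq ^ 2) * E * K \<and>
     K * F = phi (inverse (qq ^ 2)) * F * K"

definition Kpow :: "'a::ring_1 \<Rightarrow> 'a \<Rightarrow> int \<Rightarrow> 'a" where
  "Kpow K Ki z = (if 0 \<le> z then K ^ nat z else Ki ^ nat (- z))"

definition Echeck :: "(qf \<Rightarrow> 'a::ring_1) \<Rightarrow> 'a \<Rightarrow> 'a \<Rightarrow> 'a" where
  "Echeck phi E Ki = phi (inverse qq) * E * Ki"

definition dpow :: "(qf \<Rightarrow> 'a::ring_1) \<Rightarrow> 'a \<Rightarrow> nat \<Rightarrow> 'a" where
  "dpow phi X n = phi (inverse (qfact n)) * X ^ n"

fun hbin :: "(qf \<Rightarrow> 'a::ring_1) \<Rightarrow> 'a \<Rightarrow> int \<Rightarrow> nat \<Rightarrow> 'a" where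
  "hbin phi Ki a 0 = 1"
| "hbin phi Ki a (Suc n) = hbin phi Ki a n *
     (phi (inverse (qq ^ (4 * Suc n) - 1)) *
      (phi (qq powi (4 * a + 4 * int (Suc n) - 4)) * Ki ^ 2 - phi (qq ^ 2)))"

definition tel :: "(qf \<Rightarrow> 'a::ring_1) \<Rightarrow> 'a \<Rightarrow> 'a \<Rightarrow> 'a \<Rightarrow> qf \<Rightarrow> 'a" where
  "tel phi E F Ki kappa = F + Echeck phi E Ki + phi kappa * Ki"

definition tprod :: "(qf \<Rightarrow> 'a::ring_1) \<Rightarrow> 'a \<Rightarrow> nat \<Rightarrow> 'a" where
  "tprod phi t a = prod_list (map (\<lambda>j. t - phi (qint (2 * j - 1))) [- int a + 1 .. int a])"

definition tdot_even :: "(qf \<Rightarrow> 'a::ring_1) \<Rightarrow> 'a \<Rightarrow> nat \<Rightarrow> 'a" where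
  "tdot_even phi t a = phi (inverse (qfact (2 * a))) * tprod phi t a"

definition tdot_odd :: "(qf \<Rightarrow> 'a::ring_1) \<Rightarrow> 'a \<Rightarrow> nat \<Rightarrow> 'a" where
  "tdot_odd phi t a = phi (inverse (qfact (2 * a + 1))) * (t * tprod phi t a)"

end

theory Submission
  imports Defs "HOL-Library.Groups_Big_Fun"
begin

lemma qq_pow: "qq ^ k = Fract ([:0,1:] ^ k) 1"
  by (induction k) (simp_all add: qq_def One_fract_def)

lemma qq_pow_ne1: "k > 0 \<Longrightarrow> qq ^ k \<noteq> 1"
proof
  assume k: "k > 0" and h: "qq ^ k = 1"
  have "Fract ([:0,1:] ^ k) 1 = Fract (1::rat poly) 1" using h by (simp add: qq_pow One_fract_def)
  hence "[:0,1:] ^ k = (1::rat poly)" by (simp add: eq_fract)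
  hence "degree ([:0,1::rat:] ^ k) = degree (1::rat poly)" by simp
  thus False using k by (simp add: degree_power_eq)
qed

lemma qq_ne0 [simp]: "qq \<noteq> 0"
  by (simp add: qq_def eq_fract Zero_fract_def)

definition qp :: "int \<Rightarrow> qf" where "qp n = qq powi n"

lemma qp_add: "qp (x + y) = qp x * qp y"
  by (simp add: qp_def power_int_add)
lemma qp_diff: "qp (x - y) = qp x / qp y"
  by (simp add: qp_def power_int_diff)
lemma qp_0 [simp]: "qp 0 = 1" by (simp add: qp_def)
lemma qp_ne0 [simp]: "qp x \<noteq> 0" by (simp add: qp_def)
lemma qp_minus: "qp (- x) = inverse (qp x)" by (simp add: qp_def power_int_minus)
lemma qp_nat: "qp (int n) = qq ^ n" by (simp add: qp_def)

lemma qp_eq1: "qp x = 1 \<longleftrightarrow> x = 0"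
proof
  assume h: "qp x = 1"
  show "x = 0"
  proof (rule ccontr)
    assume "x \<noteq> 0"
    then consider "x > 0" | "x < 0" by linarith
    thus False
    proof cases
      case 1
      then obtain n where "x = int n" "n > 0" by (metis pos_int_cases)
      thus False using h qq_pow_ne1[of n] by (simp add: qp_nat)
    next
      case 2
      then obtain n where "x = - int n" "n > 0" by (metis neg_int_cases neg_0_less_iff_less of_nat_0_less_iff)
      thus False using h qq_pow_ne1[of n] by (simp add: qp_minus qp_nat)
    qed
  qed
qed simp

lemma qp_inj: "qp x = qp y \<longleftrightarrow> x = y"
proof
  assume "qp x = qp y"
  hence "qp (x - y) = 1" by (simp add: qp_diff)
  thus "x = y" using qp_eq1 by simp
qed simp

definition DD :: qf where "DD = qq - inverse qq"

lemma qint_qp: "qint n = (qp n - qp (- n)) / (qp 1 - qp (-1))"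
  by (simp add: qint_def qp_def)

lemma DD_qp: "DD = qp 1 - qp (-1)" by (simp add: DD_def qp_def power_int_minus)

lemma DD_ne0 [simp]: "DD \<noteq> 0"
proof
  assume "DD = 0"
  hence "qp 1 = qp (-1)" by (simp add: DD_qp)
  thus False by (simp add: qp_inj)
qed

lemma qint_DD: "qint n = (qp n - qp (- n)) / DD"
  by (simp add: qint_qp DD_qp)

lemma qint_0 [simp]: "qint 0 = 0" by (simp add: qint_def)

lemma qint_ne0: "n \<noteq> 0 \<Longrightarrow> qint n \<noteq> 0"
  by (simp add: qint_DD qp_inj)

lemma qfact_Suc: "qfact (Suc n) = qfact n * qint (int (Suc n))"
  by (simp add: qfact_def)

lemma qfact_ne0 [simp]: "qfact n \<noteq> 0"
  by (induction n) (simp_all add: qfact_Suc qint_ne0, simp add: qfact_def)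

lemma qq4_ne1: "qq ^ (4 * Suc n) - 1 \<noteq> 0"
  using qq_pow_ne1[of "4 * Suc n"] by simp

lemma qint_1 [simp]: "qint 1 = 1"
  using DD_ne0 by (simp add: qint_def DD_def)

lemma pdiv_neg: "n < 0 \<Longrightarrow> pdiv n x = 0" by (simp add: pdiv_def)

lemma pdiv_rec: "qint (N + 1) * pdiv (N + 1) x = x * pdiv N x + qp (1 - 2 * N) * qint (N - 1) * pdiv (N - 1) x"
proof (cases "N < -1")
  case True thus ?thesis by (simp add: pdiv_def)
next
  case False
  hence "N = -1 \<or> N \<ge> 0" by linarith
  thus ?thesis
  proof
    assume "N = -1" thus ?thesis by (simp add: pdiv_def)
  next
    assume "N \<ge> 0"
    then obtain n where n: "N = int n" by (metis nonneg_int_cases)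
    show ?thesis
    proof (cases n)
      case 0 thus ?thesis using n by (simp add: pdiv_def qfact_def)
    next
      case (Suc k)
      have NN: "N = int k + 1" using n Suc by simp
      have e1: "pdiv (N + 1) x = pp (Suc (Suc k)) x / qfact (Suc (Suc k))"
        "pdiv N x = pp (Suc k) x / qfact (Suc k)" "pdiv (N - 1) x = pp k x / qfact k"
        by (simp_all add: pdiv_def NN nat_add_distrib)
      have e2: "qint (N + 1) = qint (int (Suc (Suc k)))" "qint (N - 1) = qint (int k)"
        "qp (1 - 2 * N) = qq powi (1 - 2 * (int k + 1))" by (simp_all add: NN qp_def add_ac)
      have nz: "qint (int (Suc (Suc k))) \<noteq> 0" "qint (int (Suc k)) \<noteq> 0" by (simp_all add: qint_ne0)
      have "qint (N + 1) * pdiv (N + 1) x = pp (Suc (Suc k)) x / qfact (Suc k)"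
        unfolding e1 e2 using nz by (simp add: qfact_Suc[of "Suc k"] field_simps)
      also have "\<dots> = x * pdiv N x + qp (1 - 2 * N) * qint (N - 1) * pdiv (N - 1) x"
        unfolding e1 e2 using nz
        by (simp only: pp.simps qfact_Suc[of k]) (simp add: field_simps)
      finally show ?thesis .
    qed
  qed
qed

lemma qp_num: "qp (numeral k) = qq ^ numeral k" by (simp add: qp_def)
lemma qp_one: "qp 1 = qq" by (simp add: qp_def)
lemma qp_mnum: "qp (x * numeral k) = qp x ^ numeral k"
  by (simp add: qp_def power_int_mult)
lemma qp_mnum2: "qp (x * (y * numeral k)) = qp (x * y) ^ numeral k"
  by (simp add: qp_mnum mult.assoc[symmetric])
lemma qp_nummul: "qp (numeral k * x) = qp x ^ numeral k"
  by (simp add: qp_mnum mult.commute)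

lemmas qpsplit = qp_add qp_diff qp_minus qp_num qp_one qp_mnum qp_mnum2 qp_nummul
  distrib_left distrib_right left_diff_distrib right_diff_distrib mult.assoc mult.commute mult.left_commute


lemma DDnz: "qp 1 - qp (-1) \<noteq> 0" using DD_ne0 by (simp add: DD_qp)

locale urep =
  fixes ph :: "qf \<Rightarrow> 'a::ring_1" and E F K Ki :: 'a
  assumes U: "U_rep ph E F K Ki"
begin

lemma ph_add: "ph (x + y) = ph x + ph y" using U unfolding U_rep_def by blast
lemma ph_mult: "ph (x * y) = ph x * ph y" using U unfolding U_rep_def by blast
lemma ph_1 [simp]: "ph 1 = 1" using U unfolding U_rep_def by blast
lemma ph_comm: "ph x * z = z * ph x" using U unfolding U_rep_def by blast
lemma KKi [simp]: "K * Ki = 1" using U unfolding U_rep_def by blast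
lemma KiK [simp]: "Ki * K = 1" using U unfolding U_rep_def by blast
lemma EF: "E * F - F * E = ph (inverse DD) * (K - Ki)" using U by (simp add: U_rep_def DD_def)
lemma KE0: "K * E = ph (qq ^ 2) * E * K" using U unfolding U_rep_def by blast
lemma KF0: "K * F = ph (inverse (qq ^ 2)) * F * K" using U unfolding U_rep_def by blast

lemma ph_0 [simp]: "ph 0 = 0"
proof -
  have "ph 0 = ph 0 + ph 0" using ph_add[of 0 0] by simp
  thus ?thesis by simp
qed
lemma ph_uminus: "ph (- x) = - ph x"
proof -
  have "ph (- x) + ph x = 0" using ph_add[of "-x" x] by simp
  thus ?thesis by (simp add: eq_neg_iff_add_eq_0)
qed
lemma ph_diff: "ph (x - y) = ph x - ph y"
  using ph_add[of x "-y"] ph_uminus[of y] by simp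
lemma ph_sum: "ph (sum f A) = (\<Sum>x\<in>A. ph (f x))"
  by (induction A rule: infinite_finite_induct) (simp_all add: ph_add)
lemma ph_power: "ph (x ^ n) = ph x ^ n"
  by (induction n) (simp_all add: ph_mult)

definition sm :: "qf \<Rightarrow> 'a \<Rightarrow> 'a" where "sm s z = ph s * z"

lemma sm_left [simp]: "sm s z * w = sm s (z * w)" by (simp add: sm_def mult.assoc)
lemma sm_right [simp]: "z * sm s w = sm s (z * w)"
  by (simp add: sm_def mult.assoc[symmetric] ph_comm[of s z, symmetric])
lemma sm_sm [simp]: "sm s (sm t z) = sm (s * t) z" by (simp add: sm_def ph_mult mult.assoc)
lemma sm_0 [simp]: "sm 0 z = 0" "sm s 0 = 0" by (simp_all add: sm_def)
lemma sm_1 [simp]: "sm 1 z = z" by (simp add: sm_def)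
lemma sm_add: "sm s (z + w) = sm s z + sm s w" by (simp add: sm_def distrib_left)
lemma sm_diff: "sm s (z - w) = sm s z - sm s w" by (simp add: sm_def right_diff_distrib)
lemma sm_minus: "sm s (- z) = - sm s z" by (simp add: sm_def)
lemma sm_add_left: "sm (s + t) z = sm s z + sm t z" by (simp add: sm_def ph_add distrib_right)
lemma sm_diff_left: "sm (s - t) z = sm s z - sm t z" by (simp add: sm_def ph_diff left_diff_distrib)
lemma sm_uminus_left: "sm (- s) z = - sm s z" by (simp add: sm_def ph_uminus)
lemma sm_sum: "sm s (sum f A) = (\<Sum>x\<in>A. sm s (f x))" by (simp add: sm_def sum_distrib_left)
lemma sm_sum_left: "sm (sum f A) z = (\<Sum>x\<in>A. sm (f x) z)" by (simp add: sm_def ph_sum sum_distrib_right)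
lemma ph_sm: "ph s = sm s 1" by (simp add: sm_def)
lemma sm_inv: "s \<noteq> 0 \<Longrightarrow> sm (inverse s) (sm s z) = z" by simp

lemma sm_cancel: "s \<noteq> 0 \<Longrightarrow> sm s z = sm s w \<Longrightarrow> z = w"
  by (metis sm_inv)

lemma KE: "K * E = sm (qq ^ 2) (E * K)" using KE0 by (simp add: sm_def mult.assoc)
lemma KF: "K * F = sm (inverse (qq ^ 2)) (F * K)" using KF0 by (simp add: sm_def mult.assoc)

lemma EK: "E * K = sm (inverse (qq ^ 2)) (K * E)" by (simp add: KE)
lemma FK: "F * K = sm (qq ^ 2) (K * F)" by (simp add: KF)

lemma KiE: "Ki * E = sm (inverse (qq ^ 2)) (E * Ki)"
proof -
  have "Ki * E = Ki * (E * K) * Ki" by (simp add: mult.assoc)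
  also have "\<dots> = sm (inverse (qq ^ 2)) (E * Ki)" by (simp add: EK mult.assoc[symmetric])
  finally show ?thesis .
qed
lemma EKi: "E * Ki = sm (qq ^ 2) (Ki * E)" by (simp add: KiE)

lemma KiF: "Ki * F = sm (qq ^ 2) (F * Ki)"
proof -
  have "Ki * F = Ki * (F * K) * Ki" by (simp add: mult.assoc)
  also have "\<dots> = sm (qq ^ 2) (F * Ki)" by (simp add: FK mult.assoc[symmetric])
  finally show ?thesis .
qed
lemma FKi: "F * Ki = sm (inverse (qq ^ 2)) (Ki * F)" by (simp add: KiF)

abbreviation "Ec \<equiv> Echeck ph E Ki"

lemma Ec_def': "Ec = sm (inverse qq) (E * Ki)" by (simp add: Echeck_def sm_def mult.assoc)

lemma KEc: "K * Ec = sm (qq ^ 2) (Ec * K)"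
  by (simp add: Ec_def' mult.assoc[symmetric] KE) (simp add: mult.assoc mult.commute)
lemma KiEc: "Ki * Ec = sm (inverse (qq ^ 2)) (Ec * Ki)"
  by (simp add: Ec_def' mult.assoc[symmetric] KiE mult.commute)

lemma FEc: "F * Ec = sm (inverse (qq ^ 2)) (Ec * F) - sm (inverse (qq * DD)) (1 - Ki * Ki)"
proof -
  have fe: "F * E = E * F - sm (inverse DD) (K - Ki)" using EF by (simp add: sm_def algebra_simps)
  have "F * Ec = sm (inverse qq) (F * E * Ki)" by (simp add: Ec_def' mult.assoc)
  also have "\<dots> = sm (inverse qq) (E * (F * Ki)) - sm (inverse qq * inverse DD) (1 - Ki * Ki)"
    by (simp add: fe left_diff_distrib sm_diff mult.assoc)
  also have "\<dots> = sm (inverse (qq ^ 2)) (Ec * F) - sm (inverse (qq * DD)) (1 - Ki * Ki)"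
    by (simp add: FKi Ec_def' mult.assoc[symmetric] mult.commute)
  finally show ?thesis .
qed

end

lemma qp_1: "qp 1 = qq" by (simp add: qp_def)
lemma qp_2: "qp 2 = qq ^ 2" by (simp add: qp_def)
lemma qp_m1: "qp (-1) = inverse qq" by (simp add: qp_def power_int_minus)
lemma qp_m2: "qp (-2) = inverse (qq ^ 2)" by (simp add: qp_def power_int_minus)

context urep begin

lemma KiEc': "Ki * Ec = sm (qp (-2)) (Ec * Ki)" by (simp add: KiEc qp_m2)
lemma FEc': "F * Ec = sm (qp (-2)) (Ec * F) - sm (qp (-1) / DD) (1 - Ki * Ki)"
  by (simp add: FEc qp_m2 qp_m1 field_simps)
lemma FKi': "F * Ki = sm (qp (-2)) (Ki * F)" by (simp add: FKi qp_m2)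
lemma FK': "F * K = sm (qp 2) (K * F)" by (simp add: FK qp_2)

lemma KKi_comm: "K * Ki = Ki * K" by simp
lemma KKi_assoc [simp]: "K * (Ki * x) = x" by (simp add: mult.assoc[symmetric])
lemma KiK_assoc [simp]: "Ki * (K * x) = x" by (simp add: mult.assoc[symmetric])

lemma Kpow_0 [simp]: "Kpow K Ki 0 = 1" by (simp add: Kpow_def)

lemma K_Kipow: "K * Ki ^ Suc n = Ki ^ n"
  by (simp add: mult.assoc[symmetric] power_Suc)

lemma Kpow_succ: "Kpow K Ki (z + 1) = K * Kpow K Ki z"
proof (cases "z \<ge> 0")
  case True
  hence "nat (z + 1) = Suc (nat z)" by simp
  thus ?thesis using True by (simp add: Kpow_def)
next
  case False
  define n where "n = nat (- z - 1)"
  have n: "nat (- z) = Suc n" "nat (- (z + 1)) = n" using False by (simp_all add: n_def)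
  show ?thesis
  proof (cases "z = -1")
    case True thus ?thesis by (simp add: Kpow_def)
  next
    case False
    with \<open>\<not> z \<ge> 0\<close> have "\<not> 0 \<le> z + 1" by simp
    thus ?thesis using \<open>\<not> z \<ge> 0\<close> n by (simp add: Kpow_def K_Kipow)
  qed
qed

lemma Kpow_pred: "Kpow K Ki (z - 1) = Ki * Kpow K Ki z"
proof -
  have "Kpow K Ki z = K * Kpow K Ki (z - 1)" using Kpow_succ[of "z - 1"] by simp
  hence "Ki * Kpow K Ki z = (Ki * K) * Kpow K Ki (z - 1)" by (simp add: mult.assoc)
  thus ?thesis by simp
qed

lemma K_Kpow_comm: "K * Kpow K Ki z = Kpow K Ki z * K"
proof -
  have "K * Ki ^ n = Ki ^ n * K" for n
  proof (induction n)
    case (Suc n)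
    have "K * Ki ^ Suc n = (K * Ki) * Ki ^ n" by (simp add: mult.assoc)
    also have "\<dots> = Ki * (K * Ki ^ n)" by (simp add: mult.assoc[symmetric])
    also have "\<dots> = Ki ^ Suc n * K" by (simp add: Suc mult.assoc)
    finally show ?case .
  qed simp
  thus ?thesis by (simp add: Kpow_def power_commutes)
qed

lemma Ki_Kpow_comm: "Ki * Kpow K Ki z = Kpow K Ki z * Ki"
proof -
  have "K * Ki ^ n = Ki ^ n * K" for n
  proof (induction n)
    case (Suc n)
    have "K * Ki ^ Suc n = (K * Ki) * Ki ^ n" by (simp add: mult.assoc)
    also have "\<dots> = Ki * (K * Ki ^ n)" by (simp add: mult.assoc[symmetric])
    also have "\<dots> = Ki ^ Suc n * K" by (simp add: Suc mult.assoc)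
    finally show ?case .
  qed simp
  have "Ki * K ^ n = K ^ n * Ki" for n
  proof (induction n)
    case (Suc n)
    have "Ki * K ^ Suc n = (Ki * K) * K ^ n" by (simp add: mult.assoc)
    also have "\<dots> = K * (Ki * K ^ n)" by (simp add: mult.assoc[symmetric])
    also have "\<dots> = K ^ Suc n * Ki" by (simp add: Suc mult.assoc)
    finally show ?case .
  qed simp
  thus ?thesis by (simp add: Kpow_def power_commutes)
qed

lemma Kpow_succ': "Kpow K Ki (z + 1) = Kpow K Ki z * K"
  by (simp add: Kpow_succ K_Kpow_comm)
lemma Kpow_pred': "Kpow K Ki (z - 1) = Kpow K Ki z * Ki"
  by (simp add: Kpow_pred Ki_Kpow_comm)

lemma Kpow_add: "Kpow K Ki (x + y) = Kpow K Ki x * Kpow K Ki y"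
proof (induction y rule: int_induct[where k = 0])
  case base thus ?case by simp
next
  case (step1 i)
  have "Kpow K Ki (x + (i + 1)) = Kpow K Ki (x + i) * K" using Kpow_succ'[of "x + i"] by (simp add: add.assoc)
  thus ?case by (simp add: step1 Kpow_succ' mult.assoc)
next
  case (step2 i)
  have "Kpow K Ki (x + (i - 1)) = Kpow K Ki (x + i) * Ki" using Kpow_pred'[of "x + i"] by (simp add: algebra_simps)
  thus ?case by (simp add: step2 Kpow_pred' mult.assoc)
qed

lemma Kpow_1 [simp]: "Kpow K Ki 1 = K" using Kpow_succ[of 0] by simp
lemma Kpow_m1 [simp]: "Kpow K Ki (-1) = Ki" using Kpow_pred[of 0] by simp

lemma F_Kpow: "F * Kpow K Ki e = sm (qp (2 * e)) (Kpow K Ki e * F)"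
proof (induction e rule: int_induct[where k = 0])
  case base thus ?case by simp
next
  case (step1 i)
  have "F * Kpow K Ki (i + 1) = (F * K) * Kpow K Ki i" by (simp add: Kpow_succ mult.assoc)
  also have "\<dots> = sm (qp 2 * qp (2 * i)) (K * Kpow K Ki i * F)" by (simp add: FK' mult.assoc step1)
  also have "\<dots> = sm (qp (2 * (i + 1))) (Kpow K Ki (i + 1) * F)"
  proof -
    have e: "qp 2 * qp (2 * i) = qp (2 * (i + 1))" by (simp add: qp_add[symmetric] algebra_simps)
    show ?thesis by (simp add: e Kpow_succ mult.assoc)
  qed
  finally show ?case .
next
  case (step2 i)
  have "F * Kpow K Ki (i - 1) = (F * Ki) * Kpow K Ki i" by (simp add: Kpow_pred mult.assoc)
  also have "\<dots> = sm (qp (-2) * qp (2 * i)) (Ki * Kpow K Ki i * F)" by (simp add: FKi' mult.assoc step2)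
  also have "\<dots> = sm (qp (2 * (i - 1))) (Kpow K Ki (i - 1) * F)"
  proof -
    have e: "qp (-2) * qp (2 * i) = qp (2 * (i - 1))" by (simp add: qp_add[symmetric] algebra_simps)
    show ?thesis by (simp add: e Kpow_pred mult.assoc)
  qed
  finally show ?case .
qed

lemma Ki_Ecpow: "Ki * Ec ^ n = sm (qp (- 2 * int n)) (Ec ^ n * Ki)"
proof (induction n)
  case (Suc n)
  have "Ki * Ec ^ Suc n = (Ki * Ec ^ n) * Ec" by (simp only: power_Suc2 mult.assoc)
  also have "\<dots> = sm (qp (- 2 * int n) * qp (-2)) (Ec ^ n * Ec * Ki)" by (simp add: Suc mult.assoc KiEc')
  also have "\<dots> = sm (qp (- 2 * int (Suc n))) (Ec ^ Suc n * Ki)"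
  proof -
    have e: "qp (- 2 * int n) * qp (-2) = qp (- 2 * int (Suc n))" by (simp add: qp_add[symmetric] algebra_simps)
    show ?thesis by (simp only: e power_Suc2)
  qed
  finally show ?case .
qed simp

lemma KiKi_Ec: "Ki * Ki * Ec = sm (qp (-4)) (Ec * Ki * Ki)"
proof -
  have "Ki * Ki * Ec = Ki * (Ki * Ec)" by (simp add: mult.assoc)
  also have "\<dots> = sm (qp (-2)) (Ki * (Ec * Ki))" by (simp only: KiEc' sm_right)
  also have "\<dots> = sm (qp (-2)) ((Ki * Ec) * Ki)" by (simp only: mult.assoc)
  also have "\<dots> = sm (qp (-2) * qp (-2)) (Ec * Ki * Ki)" by (simp only: KiEc' sm_left sm_sm)
  also have "qp (-2) * qp (-2) = qp (-4)" by (simp add: qp_add[symmetric])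
  finally show ?thesis .
qed

lemma F_Ecpow: "F * Ec ^ Suc n = sm (qp (- 2 * int (Suc n))) (Ec ^ Suc n * F)
   - sm (qint (int (Suc n)) / DD) (Ec ^ n * (sm (qp (- int (Suc n))) 1 - sm (qp (2 - 3 * int (Suc n))) (Ki * Ki)))"
proof (induction n)
  case 0
  show ?case by (simp add: FEc' sm_diff)
next
  case (Suc n)
  define M1 where "M1 = Ec * (Ec ^ n * (Ec * F))"
  define M2 where "M2 = Ec * Ec ^ n"
  define M3 where "M3 = Ec * (Ec ^ n * (Ki * Ki))"
  define \<alpha> where "\<alpha> = qp (- 2 - 2 * int n) * qp (- 2)"
  define \<beta> where "\<beta> = qp (- 2 - 2 * int n) * qp (- 1) / DD + qint (1 + int n) * qp (- 1 - int n) / DD"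
  define \<gamma> where "\<gamma> = qp (- 2 - 2 * int n) * qp (- 1) / DD + qint (1 + int n) * (qp (- 1 - 3 * int n) * qp (- 4)) / DD"
  have pc: "x ^ k * (x * y) = x * (x ^ k * y)" "x ^ k * x = x * x ^ k" for x y :: 'a and k
    by (simp_all add: mult.assoc[symmetric] power_commutes)
  have "F * Ec ^ Suc (Suc n) = (F * Ec ^ Suc n) * Ec" by (simp only: power_Suc2 mult.assoc)
  also have "\<dots> = sm \<alpha> M1 - sm \<beta> M2 + sm \<gamma> M3"
    apply (simp only: Suc.IH left_diff_distrib sm_left mult.assoc sm_diff sm_right)
    apply (simp add: FEc' KiKi_Ec[simplified mult.assoc] sm_diff right_diff_distrib mult.assoc pc
       M1_def M2_def M3_def \<alpha>_def \<beta>_def \<gamma>_def add_divide_distrib sm_add_left)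
    done
  also have "\<dots> = sm (qp (- 2 * int (Suc (Suc n)))) (Ec ^ Suc (Suc n) * F)
   - sm (qint (int (Suc (Suc n))) / DD) (Ec ^ Suc n * (sm (qp (- int (Suc (Suc n)))) 1 - sm (qp (2 - 3 * int (Suc (Suc n)))) (Ki * Ki)))"
  proof -
    have "\<alpha> = qp (- 2 * int (Suc (Suc n)))" unfolding \<alpha>_def
      by ((simp add: qint_DD field_simps)?; (simp add: DD_qp qpsplit)?; (simp add: field_simps)?; algebra?)
    moreover have "\<beta> = qint (int (Suc (Suc n))) / DD * qp (- int (Suc (Suc n)))" unfolding \<beta>_def
      by ((simp add: qint_DD field_simps)?; (simp add: DD_qp qpsplit)?; (simp add: field_simps)?; algebra?)
    moreover have "\<gamma> = qint (int (Suc (Suc n))) / DD * qp (2 - 3 * int (Suc (Suc n)))" unfolding \<gamma>_def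
      by ((simp add: qint_DD field_simps)?; (simp add: DD_qp qpsplit)?; (simp add: field_simps)?; algebra?)
    ultimately show ?thesis
      by (simp add: M1_def M2_def M3_def sm_diff right_diff_distrib mult.assoc pc)
  qed
  finally show ?case .
qed

end

declare hbin.simps(2)[simp del]

definition hs :: "nat \<Rightarrow> qf" where "hs c = inverse (qq ^ (4 * Suc c) - 1)"

lemma hs_ne0 [simp]: "hs c \<noteq> 0" using qq4_ne1[of c] by (simp add: hs_def)
lemma hs_inv: "inverse (hs c) = qp (4 * int c + 4) - 1"
proof -
  have "qq ^ (4 * Suc c) = qp (4 * int c + 4)" by (simp add: qp_nat[symmetric] algebra_simps)
  thus ?thesis by (simp add: hs_def)
qed

context urep begin

abbreviation "dE \<equiv> dpow ph Ec"
abbreviation "dF \<equiv> dpow ph F"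
abbreviation "KP \<equiv> Kpow K Ki"
abbreviation "hb \<equiv> hbin ph Ki"

lemma dpow_sm: "dpow ph X n = sm (inverse (qfact n)) (X ^ n)" by (simp add: dpow_def sm_def)

lemma dpow_0 [simp]: "dpow ph X 0 = 1" by (simp add: dpow_sm qfact_def)

lemma X_dpow: "X * dpow ph X n = sm (qint (int n + 1)) (dpow ph X (Suc n))"
proof -
  have "qint (int n + 1) * inverse (qfact (Suc n)) = inverse (qfact n)"
    using qint_ne0[of "int n + 1"] by (simp add: qfact_Suc field_simps add.commute)
  thus ?thesis by (simp add: dpow_sm)
qed

lemma Ki_dE: "Ki * dE n = sm (qp (- 2 * int n)) (dE n * Ki)"
  by (simp add: dpow_sm Ki_Ecpow mult.commute)

lemma F_dE: "F * dE (Suc n) = sm (qp (- 2 * int (Suc n))) (dE (Suc n) * F)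
   - sm (1 / DD) (dE n * (sm (qp (- int (Suc n))) 1 - sm (qp (2 - 3 * int (Suc n))) (Ki * Ki)))"
proof -
  have e: "inverse (qfact (Suc n)) * (qint (int (Suc n)) / DD) = 1 / DD * inverse (qfact n)"
    using qint_ne0[of "int (Suc n)"] by (simp add: qfact_Suc field_simps)
  show ?thesis
    apply (simp only: dpow_sm sm_right F_Ecpow sm_diff sm_sm sm_left)
    apply (simp only: e)
    apply (simp add: mult.commute)
    done
qed

lemma hb_Suc: "hb \<mu> (Suc c) = hb \<mu> c * sm (hs c) (sm (qp (4 * \<mu> + 4 * int c)) (Ki * Ki) - sm (qp 2) 1)"
  by (simp only: hbin.simps(2) sm_def hs_def) (simp add: qp_def power2_eq_square)

lemma Ki_hb: "Ki * hb \<mu> c = hb \<mu> c * Ki"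
proof (induction c)
  case (Suc c)
  show ?case
    by (simp add: hb_Suc mult.assoc[symmetric] Suc) (simp add: mult.assoc right_diff_distrib left_diff_distrib sm_diff)
qed simp

lemma K_hb: "K * hb \<mu> c = hb \<mu> c * K"
proof -
  have "K * hb \<mu> c = K * hb \<mu> c * (Ki * K)" by simp
  also have "\<dots> = K * (Ki * hb \<mu> c) * K" by (simp only: mult.assoc Ki_hb)
  finally show ?thesis by (simp add: mult.assoc)
qed

lemma KP_hb: "KP e * hb \<mu> c = hb \<mu> c * KP e"
proof (induction e rule: int_induct[where k = 0])
  case base thus ?case by simp
next
  case (step1 i)
  have "KP (i + 1) * hb \<mu> c = K * (KP i * hb \<mu> c)" by (simp add: Kpow_succ mult.assoc)
  also have "\<dots> = (K * hb \<mu> c) * KP i" by (simp add: step1 mult.assoc)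
  also have "\<dots> = hb \<mu> c * KP (i + 1)" by (simp add: K_hb Kpow_succ mult.assoc)
  finally show ?case .
next
  case (step2 i)
  have "KP (i - 1) * hb \<mu> c = Ki * (KP i * hb \<mu> c)" by (simp add: Kpow_pred mult.assoc)
  also have "\<dots> = (Ki * hb \<mu> c) * KP i" by (simp add: step2 mult.assoc)
  also have "\<dots> = hb \<mu> c * KP (i - 1)" by (simp add: Ki_hb Kpow_pred mult.assoc)
  finally show ?case .
qed

lemma F_KiKi: "F * (Ki * Ki) = sm (qp (-4)) (Ki * Ki * F)"
proof -
  have "F * (Ki * Ki) = (F * Ki) * Ki" by (simp add: mult.assoc)
  also have "\<dots> = sm (qp (-2)) (Ki * (F * Ki))" by (simp add: FKi' mult.assoc)
  also have "\<dots> = sm (qp (-2) * qp (-2)) (Ki * (Ki * F))" by (simp add: FKi')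
  also have "qp (-2) * qp (-2) = qp (-4)" by (simp add: qp_add[symmetric])
  finally show ?thesis by (simp add: mult.assoc)
qed

lemma F_hb: "F * hb \<mu> c = hb (\<mu> - 1) c * F"
proof (induction c)
  case (Suc c)
  have e: "qp (4 * \<mu> + 4 * int c) * qp (-4) = qp (4 * (\<mu> - 1) + 4 * int c)" by (simp add: qp_add[symmetric] algebra_simps)
  show ?case
    apply (simp add: hb_Suc mult.assoc[symmetric] Suc)
    apply (simp add: mult.assoc right_diff_distrib left_diff_distrib sm_diff F_KiKi e)
    done
qed simp

lemma KiKi_KP: "Ki * Ki * KP e = KP (e - 2)"
  using Kpow_pred[of e] Kpow_pred[of "e - 1"] by (simp add: mult.assoc)

lemma hb_R2: "hb \<mu> c * KP (e + 2) = sm (qp (4 * \<mu> + 4 * int c - 2)) (hb \<mu> c * KP e)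
   - sm ((qp (4 * int c + 4) - 1) * qp (-2)) (hb \<mu> (Suc c) * KP (e + 2))"
proof -
  define s where "s = hs c"
  have s0: "s \<noteq> 0" by (simp add: s_def)
  have "hb \<mu> (Suc c) * KP (e + 2) = sm (s * qp (4 * \<mu> + 4 * int c)) (hb \<mu> c * KP e) - sm (s * qp 2) (hb \<mu> c * KP (e + 2))"
    using KiKi_KP[of "e + 2"]
    by (simp add: hb_Suc s_def left_diff_distrib sm_diff mult.assoc right_diff_distrib)
  hence "sm (s * qp 2) (hb \<mu> c * KP (e + 2)) = sm (s * qp (4 * \<mu> + 4 * int c)) (hb \<mu> c * KP e) - hb \<mu> (Suc c) * KP (e + 2)"
    by (simp add: algebra_simps)
  hence H: "sm (inverse (s * qp 2)) (sm (s * qp 2) (hb \<mu> c * KP (e + 2))) = sm (inverse (s * qp 2)) (sm (s * qp (4 * \<mu> + 4 * int c)) (hb \<mu> c * KP e) - hb \<mu> (Suc c) * KP (e + 2))"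
    by simp
  have nz: "s * qp 2 \<noteq> 0" using s0 by simp
  have "hb \<mu> c * KP (e + 2) = sm (inverse (s * qp 2) * (s * qp (4 * \<mu> + 4 * int c))) (hb \<mu> c * KP e) - sm (inverse (s * qp 2)) (hb \<mu> (Suc c) * KP (e + 2))"
    using H by (simp only: sm_diff sm_sm left_inverse[OF nz] sm_1)
  moreover have "inverse (s * qp 2) * (s * qp (4 * \<mu> + 4 * int c)) = qp (4 * \<mu> + 4 * int c - 2)"
    using s0 by (simp add: qp_diff field_simps)
  moreover have "inverse (s * qp 2) = (qp (4 * int c + 4) - 1) * qp (-2)"
    using s0 hs_inv[of c] by (simp add: s_def qp_minus)
  ultimately show ?thesis by simp
qed

lemma Qprod: "(sm a y + sm b 1) * (sm c y + sm d 1) = sm (a * c) (y * y) + sm (a * d + b * c) y + sm (b * d) 1"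
  by (simp add: distrib_left distrib_right sm_add sm_add_left algebra_simps)

lemma Ki_comm_hb: "Ki * Ki * hb \<mu> c = hb \<mu> c * (Ki * Ki)"
  by (simp add: mult.assoc Ki_hb) (simp add: mult.assoc[symmetric] Ki_hb)

lemma hb_Suc_Q: "hb \<mu> (Suc c) = hb \<mu> c * (sm (hs c * qp (4 * \<mu> + 4 * int c)) (Ki * Ki) + sm (- (hs c * qp 2)) 1)"
  by (simp add: hb_Suc sm_diff sm_uminus_left)

lemma hb_shift: "hb (\<mu> - 1) (Suc c) = hb \<mu> (Suc c) - sm (qp (4 * \<mu> - 4)) (Ki * Ki * hb \<mu> c)"
proof (induction c)
  case 0
  have X: "qp 4 \<noteq> 1" by (simp add: qp_eq1)
  have "hs 0 * qp (4 * (\<mu> - 1)) = hs 0 * qp (4 * \<mu>) - qp (4 * \<mu> - 4)"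
  proof -
    have e1: "qp (4 * \<mu>) = qp (4 * \<mu> - 4) * qp 4" by (simp add: qp_add[symmetric])
    have "hs 0 = inverse (qp 4 - 1)" using hs_inv[of 0] by (metis inverse_inverse_eq of_nat_0 mult_zero_right add_0)
    hence e2: "hs 0 * (qp 4 - 1) = 1" using X by simp
    have e3: "4 * (\<mu> - 1) = 4 * \<mu> - 4" by simp
    show ?thesis unfolding e3 using e1 e2 by algebra
  qed
  thus ?case by (simp add: hb_Suc_Q sm_diff_left algebra_simps) (simp only: sm_add_left[symmetric])
next
  case (Suc c)
  define y where "y = Ki * Ki"
  define R where "R = qp (4 * \<mu> + 4 * int c)"
  define \<rho> where "\<rho> = qp (4 * \<mu> - 4)"
  define a1 where "a1 = hs c * R"
  define b1 where "b1 = - (hs c * qp 2)"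
  define a2 where "a2 = hs (Suc c) * qp (4 * \<mu> + 4 * int (Suc c))"
  define a3 where "a3 = hs (Suc c) * qp (4 * (\<mu> - 1) + 4 * int (Suc c))"
  define b2 where "b2 = - (hs (Suc c) * qp 2)"
  have yh: "y * hb \<mu> n = hb \<mu> n * y" for n unfolding y_def by (rule Ki_comm_hb)
  have yh': "y * (hb \<mu> n * z) = hb \<mu> n * (y * z)" for n z by (simp add: mult.assoc[symmetric] yh)
  have f1: "hb \<mu> (Suc c) = hb \<mu> c * (sm a1 y + sm b1 1)" by (simp add: hb_Suc_Q a1_def b1_def R_def y_def)
  have f2: "hb \<mu> (Suc (Suc c)) = hb \<mu> (Suc c) * (sm a2 y + sm b2 1)" by (simp add: hb_Suc_Q[of _ "Suc c"] a2_def b2_def y_def)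
  have f3: "hb (\<mu> - 1) (Suc (Suc c)) = hb (\<mu> - 1) (Suc c) * (sm a3 y + sm b2 1)" by (simp add: hb_Suc_Q[of _ "Suc c"] a3_def b2_def y_def)
  have key: "(sm (a1 - \<rho>) y + sm b1 1) * (sm a3 y + sm b2 1) = (sm a1 y + sm b1 1) * (sm (a2 - \<rho>) y + sm b2 1)"
  proof -
    define X where "X = qp (4 * int c + 4)"
    define Q4 where "Q4 = qp 4"
    have X0: "X \<noteq> 0" "X \<noteq> 1" by (simp_all add: X_def qp_eq1)
    have XQ: "X * Q4 \<noteq> 1" by (simp add: X_def Q4_def qp_add[symmetric] qp_eq1)
    have hs1: "hs c = inverse (X - 1)" using hs_inv[of c] by (metis X_def inverse_inverse_eq)
    have hs2: "hs (Suc c) = inverse (X * Q4 - 1)" using hs_inv[of "Suc c"]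
      by (metis X_def Q4_def inverse_inverse_eq qp_add of_nat_Suc distrib_left mult_1_right add.commute add.left_commute)
    have r1: "\<rho> = R / X" by (simp add: \<rho>_def R_def X_def qp_diff[symmetric] algebra_simps)
    have r2: "qp (4 * \<mu> + 4 * int (Suc c)) = R * Q4" by (simp add: R_def Q4_def qp_add[symmetric] algebra_simps)
    have r3: "qp (4 * (\<mu> - 1) + 4 * int (Suc c)) = R" by (simp add: R_def algebra_simps)
    have c1: "(a1 - \<rho>) * a3 = a1 * (a2 - \<rho>)"
      unfolding a1_def a2_def a3_def r1 r2 r3 hs1 hs2 using X0 XQ
      by (simp add: field_simps; algebra?)
    have c2: "(a1 - \<rho>) * b2 + b1 * a3 = a1 * b2 + b1 * (a2 - \<rho>)"
      unfolding a1_def a2_def a3_def b1_def b2_def r1 r2 r3 hs1 hs2 using X0 XQ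
      by (simp add: field_simps; algebra?)
    show ?thesis by (simp only: Qprod c1 c2)
  qed
  have "hb (\<mu> - 1) (Suc (Suc c)) = (hb \<mu> (Suc c) - sm \<rho> (y * hb \<mu> c)) * (sm a3 y + sm b2 1)"
    by (simp add: f3 Suc \<rho>_def y_def)
  also have "\<dots> = hb \<mu> c * ((sm (a1 - \<rho>) y + sm b1 1) * (sm a3 y + sm b2 1))"
    by (simp add: f1 yh sm_diff_left algebra_simps)
  also have "\<dots> = hb \<mu> c * ((sm a1 y + sm b1 1) * (sm (a2 - \<rho>) y + sm b2 1))" by (simp only: key)
  also have "\<dots> = hb \<mu> (Suc (Suc c)) - sm \<rho> (y * hb \<mu> (Suc c))"
    by (simp add: f2 f1 yh[of "Suc c"] sm_diff_left algebra_simps mult.assoc yh yh')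
  finally show ?case by (simp add: \<rho>_def y_def)
qed

end

context urep begin

definition TT :: "int \<Rightarrow> nat \<Rightarrow> nat \<Rightarrow> int \<Rightarrow> nat \<Rightarrow> 'a" where
  "TT \<mu> a c e d = dE a * hb \<mu> c * KP e * dF d"

lemma hb_0 [simp]: "hb \<mu> 0 = 1" by simp

lemma KiKi_hb_KP: "Ki * Ki * hb \<mu> c * KP e = hb \<mu> c * KP (e - 2)"
proof -
  have "Ki * Ki * hb \<mu> c * KP e = hb \<mu> c * (Ki * Ki * KP e)" by (simp add: Ki_comm_hb mult.assoc[symmetric])
  thus ?thesis by (simp add: KiKi_KP)
qed

lemma KiKi_hb_KP': "Ki * (Ki * (hb \<mu> c * (KP e * z))) = hb \<mu> c * (KP (e - 2) * z)"
proof -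
  have "Ki * (Ki * (hb \<mu> c * (KP e * z))) = (Ki * Ki * hb \<mu> c * KP e) * z" by (simp only: mult.assoc)
  also have "\<dots> = hb \<mu> c * KP (e - 2) * z" by (simp only: KiKi_hb_KP)
  finally show ?thesis by (simp only: mult.assoc)
qed

lemma tail_F: "F * (hb \<mu> c * KP e * dF d) = sm (qp (2 * e) * qint (int d + 1)) (hb \<mu> c * KP e * dF (Suc d))
  - sm (if c = 0 then 0 else qp (2 * e) * qint (int d + 1) * qp (4 * \<mu> - 4)) (hb \<mu> (c - 1) * KP (e - 2) * dF (Suc d))"
proof -
  have A: "F * (hb \<mu> c * KP e * dF d) = hb (\<mu> - 1) c * sm (qp (2 * e) * qint (int d + 1)) (KP e * dF (Suc d))"
    by (simp add: mult.assoc[symmetric] F_hb) (simp add: mult.assoc F_Kpow X_dpow)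
  show ?thesis
  proof (cases c)
    case 0 thus ?thesis using A by (simp add: mult.assoc)
  next
    case (Suc c')
    have H: "hb (\<mu> - 1) c = hb \<mu> c - sm (qp (4 * \<mu> - 4)) (Ki * Ki * hb \<mu> c')" using hb_shift Suc by simp
    have "F * (hb \<mu> c * KP e * dF d) = (hb \<mu> c - sm (qp (4 * \<mu> - 4)) (Ki * Ki * hb \<mu> c')) * sm (qp (2 * e) * qint (int d + 1)) (KP e * dF (Suc d))"
      using A by (simp only: H)
    also have "\<dots> = sm (qp (2 * e) * qint (int d + 1)) (hb \<mu> c * KP e * dF (Suc d))
      - sm (qp (2 * e) * qint (int d + 1) * qp (4 * \<mu> - 4)) ((Ki * Ki * hb \<mu> c' * KP e) * dF (Suc d))"
      by (simp add: left_diff_distrib sm_diff mult.assoc mult.commute)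
    finally show ?thesis using Suc by (simp add: KiKi_hb_KP' mult.assoc)
  qed
qed

lemma F_dE_g: "F * dE a = sm (qp (- 2 * int a)) (dE a * F)
   - sm (if a = 0 then 0 else 1 / DD) (dE (a - 1) * (sm (qp (- int a)) 1 - sm (qp (2 - 3 * int a)) (Ki * Ki)))"
  by (cases a; simp add: F_dE)

lemma P_Ec: "Ec * TT \<mu> a c e d = sm (qint (int a + 1)) (TT \<mu> (Suc a) c e d)"
  by (simp add: TT_def mult.assoc[symmetric] X_dpow)

lemma P_Ki: "Ki * TT \<mu> a c e d = sm (qp (- 2 * int a)) (TT \<mu> a c (e - 1) d)"
proof -
  have "Ki * TT \<mu> a c e d = sm (qp (- 2 * int a)) (dE a * (Ki * hb \<mu> c) * KP e * dF d)"
    by (simp add: TT_def mult.assoc[symmetric] Ki_dE)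
  also have "\<dots> = sm (qp (- 2 * int a)) (TT \<mu> a c (e - 1) d)"
    by (simp add: Ki_hb TT_def Kpow_pred mult.assoc)
  finally show ?thesis .
qed

lemma P_alpha: "dE a * hb \<mu> c * KP e * dF d = sm (qp (4 * \<mu> + 4 * int c - 2)) (TT \<mu> a c (e - 2) d)
   - sm ((qp (4 * int c + 4) - 1) * qp (-2)) (TT \<mu> a (Suc c) e d)"
proof -
  have "hb \<mu> c * KP e = sm (qp (4 * \<mu> + 4 * int c - 2)) (hb \<mu> c * KP (e - 2))
   - sm ((qp (4 * int c + 4) - 1) * qp (-2)) (hb \<mu> (Suc c) * KP e)" using hb_R2[of \<mu> c "e - 2"] by simp
  hence "dE a * (hb \<mu> c * KP e) * dF d = dE a * (sm (qp (4 * \<mu> + 4 * int c - 2)) (hb \<mu> c * KP (e - 2))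
   - sm ((qp (4 * int c + 4) - 1) * qp (-2)) (hb \<mu> (Suc c) * KP e)) * dF d" by simp
  thus ?thesis by (simp add: TT_def right_diff_distrib left_diff_distrib sm_diff mult.assoc)
qed

lemma P_F: "F * TT \<mu> a c e d =
     sm (qp (- 2 * int a) * (qp (2 * e) * qint (int d + 1))) (TT \<mu> a c e (Suc d))
   - sm (qp (- 2 * int a) * (if c = 0 then 0 else qp (2 * e) * qint (int d + 1) * qp (4 * \<mu> - 4))) (TT \<mu> a (c - 1) (e - 2) (Suc d))
   - sm ((if a = 0 then 0 else 1 / DD) * qp (- int a)) (dE (a - 1) * hb \<mu> c * KP e * dF d)
   + sm ((if a = 0 then 0 else 1 / DD) * qp (2 - 3 * int a)) (TT \<mu> (a - 1) c (e - 2) d)"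
proof -
  have "F * TT \<mu> a c e d = (F * dE a) * (hb \<mu> c * KP e * dF d)" by (simp add: TT_def mult.assoc)
  also have "\<dots> = sm (qp (- 2 * int a)) (dE a * (F * (hb \<mu> c * KP e * dF d)))
     - sm ((if a = 0 then 0 else 1 / DD) * qp (- int a)) (dE (a - 1) * hb \<mu> c * KP e * dF d)
     + sm ((if a = 0 then 0 else 1 / DD) * qp (2 - 3 * int a)) (dE (a - 1) * (Ki * Ki * hb \<mu> c * KP e) * dF d)"
    by (simp add: F_dE_g left_diff_distrib right_diff_distrib sm_diff mult.assoc)
  also have "\<dots> = sm (qp (- 2 * int a) * (qp (2 * e) * qint (int d + 1))) (TT \<mu> a c e (Suc d))
   - sm (qp (- 2 * int a) * (if c = 0 then 0 else qp (2 * e) * qint (int d + 1) * qp (4 * \<mu> - 4))) (TT \<mu> a (c - 1) (e - 2) (Suc d))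
   - sm ((if a = 0 then 0 else 1 / DD) * qp (- int a)) (dE (a - 1) * hb \<mu> c * KP e * dF d)
   + sm ((if a = 0 then 0 else 1 / DD) * qp (2 - 3 * int a)) (TT \<mu> (a - 1) c (e - 2) d)"
    by (simp only: tail_F KiKi_hb_KP) (simp add: TT_def right_diff_distrib sm_diff mult.assoc)
  finally show ?thesis .
qed

lemma tact: "(F + Ec + sm \<kappa> Ki) * TT \<mu> a c e d =
   sm (qint (int a + 1)) (TT \<mu> (Suc a) c e d)
 + sm (\<kappa> * qp (- 2 * int a)) (TT \<mu> a c (e - 1) d)
 + sm (qp (- 2 * int a) * (qp (2 * e) * qint (int d + 1))) (TT \<mu> a c e (Suc d))
 - sm (qp (- 2 * int a) * (if c = 0 then 0 else qp (2 * e) * qint (int d + 1) * qp (4 * \<mu> - 4))) (TT \<mu> a (c - 1) (e - 2) (Suc d))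
 - sm ((if a = 0 then 0 else 1 / DD) * qp (- int a) * qp (4 * \<mu> + 4 * int c - 2)) (TT \<mu> (a - 1) c (e - 2) d)
 + sm ((if a = 0 then 0 else 1 / DD) * qp (- int a) * ((qp (4 * int c + 4) - 1) * qp (-2))) (TT \<mu> (a - 1) (Suc c) e d)
 + sm ((if a = 0 then 0 else 1 / DD) * qp (2 - 3 * int a)) (TT \<mu> (a - 1) c (e - 2) d)"
  by (simp only: distrib_right sm_left P_F P_Ec P_Ki P_alpha sm_diff sm_sm) (simp add: algebra_simps)

end

type_synonym pt = "int \<times> int \<times> int"

fun padd :: "pt \<Rightarrow> pt \<Rightarrow> pt" where "padd (a, c, d) (x, y, z) = (a + x, c + y, d + z)"
fun psub :: "pt \<Rightarrow> pt \<Rightarrow> pt" where "psub (a, c, d) (x, y, z) = (a - x, c - y, d - z)"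

lemma padd_psub [simp]: "padd (psub p q) q = p" "psub (padd p q) q = p"
  by (cases p; cases q; simp)+

lemma bij_padd: "bij (\<lambda>p. padd p q)"
proof (rule bijI)
  show "inj (\<lambda>p. padd p q)"
  proof (rule injI)
    fix x y assume "padd x q = padd y q"
    hence "psub (padd x q) q = psub (padd y q) q" by simp
    thus "x = y" by simp
  qed
  show "surj (\<lambda>p. padd p q)" by (rule surjI[of _ "\<lambda>p. psub p q"]) simp
qed

lemma Sum_any_shift: "Sum_any (\<lambda>p. f (padd p q)) = Sum_any f"
  by (rule Sum_any.reindex_cong[OF bij_padd, symmetric]) (simp add: comp_def)

lemma finite_shift: "finite {p. w p \<noteq> 0} \<Longrightarrow> finite {p. w (psub p q) \<noteq> (0::'b::zero)}"
proof -
  assume f: "finite {p. w p \<noteq> 0}"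
  have "{p. w (psub p q) \<noteq> 0} = (\<lambda>p. padd p q) ` {p. w p \<noteq> 0}"
  proof (intro set_eqI iffI)
    fix x assume "x \<in> {p. w (psub p q) \<noteq> 0}"
    thus "x \<in> (\<lambda>p. padd p q) ` {p. w p \<noteq> 0}" by (intro image_eqI[where x = "psub x q"]) auto
  next
    fix x assume "x \<in> (\<lambda>p. padd p q) ` {p. w p \<noteq> 0}"
    thus "x \<in> {p. w (psub p q) \<noteq> 0}" by auto
  qed
  thus ?thesis using f by simp
qed

definition fsupp :: "(pt \<Rightarrow> qf) \<Rightarrow> bool" where "fsupp w \<longleftrightarrow> finite {p. w p \<noteq> 0}"

definition lcomb :: "(pt \<times> (pt \<Rightarrow> qf)) list \<Rightarrow> (pt \<Rightarrow> qf) \<Rightarrow> pt \<Rightarrow> qf" where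
  "lcomb L w p = (\<Sum>j\<leftarrow>L. snd j (psub p (fst j)) * w (psub p (fst j)))"

lemma lcomb_Nil [simp]: "lcomb [] w p = 0" by (simp add: lcomb_def)
lemma lcomb_Cons [simp]: "lcomb (j # L) w p = snd j (psub p (fst j)) * w (psub p (fst j)) + lcomb L w p"
  by (simp add: lcomb_def)

lemma fsupp_lcomb: "fsupp w \<Longrightarrow> fsupp (lcomb L w)"
proof (induction L)
  case Nil thus ?case by (simp add: fsupp_def)
next
  case (Cons j L)
  have "{p. lcomb (j # L) w p \<noteq> 0} \<subseteq> {p. w (psub p (fst j)) \<noteq> 0} \<union> {p. lcomb L w p \<noteq> 0}" by auto
  moreover have "finite {p. w (psub p (fst j)) \<noteq> 0}" using Cons.prems finite_shift by (simp add: fsupp_def)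
  ultimately show ?case using Cons by (auto simp: fsupp_def intro: finite_subset)
qed

context urep begin

lemma fin_sm: "fsupp w \<Longrightarrow> finite {p. sm (w p) (Y p) \<noteq> 0}"
  unfolding fsupp_def by (rule finite_subset[of _ "{p. w p \<noteq> 0}"]) auto

lemma lift:
  assumes fs: "fsupp w"
  shows "Sum_any (\<lambda>p. sm (w p) (\<Sum>j\<leftarrow>L. sm (snd j p) (Y (padd p (fst j))))) = Sum_any (\<lambda>p. sm (lcomb L w p) (Y p))"
proof (induction L)
  case Nil thus ?case by simp
next
  case (Cons j L)
  obtain \<delta> f where j: "j = (\<delta>, f)" by fastforce
  have fin1: "finite {p. sm (w p) (sm (f p) (Y (padd p \<delta>))) \<noteq> 0}" by (rule fin_sm[OF fs])
  have fin2: "finite {p. sm (w p) (\<Sum>j\<leftarrow>L. sm (snd j p) (Y (padd p (fst j)))) \<noteq> 0}" by (rule fin_sm[OF fs])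
  have fsh: "fsupp (\<lambda>p. f (psub p \<delta>) * w (psub p \<delta>))"
  proof -
    have "finite {p. w (psub p \<delta>) \<noteq> 0}" using fs finite_shift by (simp add: fsupp_def)
    thus ?thesis unfolding fsupp_def by (rule finite_subset[rotated]) auto
  qed
  have fin3: "finite {p. sm (f (psub p \<delta>) * w (psub p \<delta>)) (Y p) \<noteq> 0}" by (rule fin_sm[OF fsh])
  have fin4: "finite {p. sm (lcomb L w p) (Y p) \<noteq> 0}" by (rule fin_sm[OF fsupp_lcomb[OF fs]])
  have "Sum_any (\<lambda>p. sm (w p) (\<Sum>j\<leftarrow>j # L. sm (snd j p) (Y (padd p (fst j)))))
      = Sum_any (\<lambda>p. sm (w p) (sm (f p) (Y (padd p \<delta>))) + sm (w p) (\<Sum>j\<leftarrow>L. sm (snd j p) (Y (padd p (fst j)))))"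
    by (simp add: j sm_add)
  also have "\<dots> = Sum_any (\<lambda>p. sm (w p) (sm (f p) (Y (padd p \<delta>)))) + Sum_any (\<lambda>p. sm (lcomb L w p) (Y p))"
    using Sum_any.distrib[OF fin1 fin2] Cons by simp
  also have "Sum_any (\<lambda>p. sm (w p) (sm (f p) (Y (padd p \<delta>)))) = Sum_any (\<lambda>p. sm (f (psub p \<delta>) * w (psub p \<delta>)) (Y p))"
  proof -
    have "Sum_any (\<lambda>p. sm (f (psub p \<delta>) * w (psub p \<delta>)) (Y p)) = Sum_any (\<lambda>p. sm (f (psub (padd p \<delta>) \<delta>) * w (psub (padd p \<delta>) \<delta>)) (Y (padd p \<delta>)))"
      by (rule Sum_any_shift[symmetric])
    thus ?thesis by (simp add: mult.commute)
  qed
  also have "Sum_any (\<lambda>p. sm (f (psub p \<delta>) * w (psub p \<delta>)) (Y p)) + Sum_any (\<lambda>p. sm (lcomb L w p) (Y p))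
     = Sum_any (\<lambda>p. sm (lcomb (j # L) w p) (Y p))"
    using Sum_any.distrib[OF fin3 fin4] by (simp add: j sm_add_left)
  finally show ?case .
qed

end

fun nonneg :: "pt \<Rightarrow> bool" where "nonneg (a, c, d) \<longleftrightarrow> 0 \<le> a \<and> 0 \<le> c \<and> 0 \<le> d"

definition tlist :: "int \<Rightarrow> int \<Rightarrow> qf \<Rightarrow> (pt \<times> (pt \<Rightarrow> qf)) list" where
  "tlist k \<mu> \<kappa> = [
     ((1, 0, 0), \<lambda>(a, c, d). qint (a + 1)),
     ((0, 0, 0), \<lambda>(a, c, d). \<kappa> * qp (- 2 * a)),
     ((0, 0, 1), \<lambda>(a, c, d). qp (- 2 * a) * (qp (2 * (a + d + 2 * c + k)) * qint (d + 1))),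
     ((0, -1, 1), \<lambda>(a, c, d). - (qp (- 2 * a) * (qp (2 * (a + d + 2 * c + k)) * qint (d + 1) * qp (4 * \<mu> - 4)))),
     ((-1, 0, 0), \<lambda>(a, c, d). qp (2 - 3 * a) / DD - qp (- a) / DD * qp (4 * \<mu> + 4 * c - 2)),
     ((-1, 1, 0), \<lambda>(a, c, d). qp (- a) / DD * ((qp (4 * c + 4) - 1) * qp (-2)))]"

definition klist :: "int \<Rightarrow> (pt \<times> (pt \<Rightarrow> qf)) list" where
  "klist \<mu> = [((0, 0, 0), \<lambda>(a, c, d). qp (4 * \<mu> + 4 * c - 2)),
              ((0, 1, 0), \<lambda>(a, c, d). - ((qp (4 * c + 4) - 1) * qp (-2)))]"

definition mlist :: "int \<Rightarrow> (pt \<times> (pt \<Rightarrow> qf)) list" where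
  "mlist \<mu> = [((0, 0, 0), \<lambda>p. 1), ((0, -1, 0), \<lambda>p. - qp (4 * \<mu> - 4))]"

context urep begin

definition Bx :: "int \<Rightarrow> int \<Rightarrow> pt \<Rightarrow> 'a" where
  "Bx k \<mu> p = (case p of (a, c, d) \<Rightarrow> if a < 0 \<or> c < 0 \<or> d < 0 then 0 else TT \<mu> (nat a) (nat c) (a + d + 2 * c + k) (nat d))"

definition SS :: "int \<Rightarrow> int \<Rightarrow> (pt \<Rightarrow> qf) \<Rightarrow> 'a" where
  "SS k \<mu> w = Sum_any (\<lambda>p. sm (w p) (Bx k \<mu> p))"

lemma Bx_nat: "Bx k \<mu> (int a, int c, int d) = TT \<mu> a c (int a + int d + 2 * int c + k) d"
  by (simp add: Bx_def)

lemma Bx_neg: "a < 0 \<or> c < 0 \<or> d < 0 \<Longrightarrow> Bx k \<mu> (a, c, d) = 0"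
  by (auto simp add: Bx_def)

lemma Bx_nonneg: "\<not> nonneg p \<Longrightarrow> Bx k \<mu> p = 0"
  by (cases p) (auto simp add: Bx_def)

lemma SS_cong: "(\<And>p. nonneg p \<Longrightarrow> w1 p = w2 p) \<Longrightarrow> SS k \<mu> w1 = SS k \<mu> w2"
proof -
  assume h: "\<And>p. nonneg p \<Longrightarrow> w1 p = w2 p"
  show ?thesis unfolding SS_def
  proof (rule Sum_any.cong)
    fix p show "sm (w1 p) (Bx k \<mu> p) = sm (w2 p) (Bx k \<mu> p)"
      by (cases "nonneg p") (simp_all add: h Bx_nonneg)
  qed
qed

lemma SS_sm: "fsupp w \<Longrightarrow> sm s (SS k \<mu> w) = SS k \<mu> (\<lambda>p. s * w p)"
proof -
  assume fs: "fsupp w"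
  have fin: "finite {p. sm (w p) (Bx k \<mu> p) \<noteq> 0}" by (rule fin_sm[OF fs])
  show ?thesis unfolding SS_def sm_def using Sum_any_right_distrib[OF fin, of "ph s"]
    by (simp add: sm_def ph_mult mult.assoc)
qed

lemma SS_add: "fsupp w1 \<Longrightarrow> fsupp w2 \<Longrightarrow> SS k \<mu> w1 + SS k \<mu> w2 = SS k \<mu> (\<lambda>p. w1 p + w2 p)"
proof -
  assume f1: "fsupp w1" and f2: "fsupp w2"
  show ?thesis unfolding SS_def using Sum_any.distrib[OF fin_sm[OF f1] fin_sm[OF f2]]
    by (simp add: sm_add_left)
qed

lemma SS_lift:
  assumes fs: "fsupp w" and X: "\<And>p. w p \<noteq> 0 \<Longrightarrow> X p = (\<Sum>j\<leftarrow>L. sm (snd j p) (Bx k \<mu> (padd p (fst j))))"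
  shows "Sum_any (\<lambda>p. sm (w p) (X p)) = SS k \<mu> (lcomb L w)"
proof -
  have "Sum_any (\<lambda>p. sm (w p) (X p)) = Sum_any (\<lambda>p. sm (w p) (\<Sum>j\<leftarrow>L. sm (snd j p) (Bx k \<mu> (padd p (fst j)))))"
  proof (rule Sum_any.cong)
    fix p show "sm (w p) (X p) = sm (w p) (\<Sum>j\<leftarrow>L. sm (snd j p) (Bx k \<mu> (padd p (fst j))))"
      by (cases "w p = 0") (simp_all add: X)
  qed
  also have "\<dots> = SS k \<mu> (lcomb L w)" unfolding SS_def by (rule lift[OF fs])
  finally show ?thesis .
qed

lemma SS_left: "fsupp w \<Longrightarrow> x * SS k \<mu> w = Sum_any (\<lambda>p. sm (w p) (x * Bx k \<mu> p))"
proof -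
  assume fs: "fsupp w"
  show ?thesis unfolding SS_def using Sum_any_right_distrib[OF fin_sm[OF fs], of x] by simp
qed

end

context urep begin

lemma tBx_nat: "(F + Ec + sm \<kappa> Ki) * Bx k \<mu> (int a, int c, int d) =
   (\<Sum>j\<leftarrow>tlist k \<mu> \<kappa>. sm (snd j (int a, int c, int d)) (Bx (k - 1) \<mu> (padd (int a, int c, int d) (fst j))))"
proof -
  define e where "e = int a + int d + 2 * int c + k"
  have T1: "Bx (k - 1) \<mu> (int a + 1, int c + 0, int d + 0) = TT \<mu> (Suc a) c e d"
    using Bx_nat[of "k - 1" \<mu> "Suc a" c d] by (simp add: e_def algebra_simps)
  have T2: "Bx (k - 1) \<mu> (int a + 0, int c + 0, int d + 0) = TT \<mu> a c (e - 1) d"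
    using Bx_nat[of "k - 1" \<mu> a c d] by (simp add: e_def algebra_simps)
  have T3: "Bx (k - 1) \<mu> (int a + 0, int c + 0, int d + 1) = TT \<mu> a c e (Suc d)"
    using Bx_nat[of "k - 1" \<mu> a c "Suc d"] by (simp add: e_def algebra_simps)
  have T4: "Bx (k - 1) \<mu> (int a + 0, int c + - 1, int d + 1) = (if c = 0 then 0 else TT \<mu> a (c - 1) (e - 2) (Suc d))"
  proof (cases c)
    case 0 thus ?thesis by (simp add: Bx_neg)
  next
    case (Suc c') thus ?thesis using Bx_nat[of "k - 1" \<mu> a c' "Suc d"] by (simp add: e_def algebra_simps)
  qed
  have T5: "Bx (k - 1) \<mu> (int a + - 1, int c + 0, int d + 0) = (if a = 0 then 0 else TT \<mu> (a - 1) c (e - 2) d)"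
  proof (cases a)
    case 0 thus ?thesis by (simp add: Bx_neg)
  next
    case (Suc a') thus ?thesis using Bx_nat[of "k - 1" \<mu> a' c d] by (simp add: e_def algebra_simps)
  qed
  have T6: "Bx (k - 1) \<mu> (int a + - 1, int c + 1, int d + 0) = (if a = 0 then 0 else TT \<mu> (a - 1) (Suc c) e d)"
  proof (cases a)
    case 0 thus ?thesis by (simp add: Bx_neg)
  next
    case (Suc a') thus ?thesis using Bx_nat[of "k - 1" \<mu> a' "Suc c" d] by (simp add: e_def algebra_simps)
  qed
  have L: "Bx k \<mu> (int a, int c, int d) = TT \<mu> a c e d" by (simp add: Bx_nat e_def)
  show ?thesis
    unfolding L tact tlist_def
    apply (simp only: list.map sum_list_simps padd.simps fst_conv snd_conv prod.case T1 T2 T3 T4 T5 T6)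
    apply (cases "a = 0"; cases "c = 0")
    apply (simp_all add: e_def sm_diff_left sm_add_left sm_uminus_left algebra_simps)
    done
qed

end

definition QE :: "int \<Rightarrow> int \<Rightarrow> int \<Rightarrow> int \<Rightarrow> int" where
  "QE m a c d = c * (2 * c - 1) - (a + d) * (2 * m - a - d - 2 * c) - a * d"
definition QO :: "int \<Rightarrow> int \<Rightarrow> int \<Rightarrow> int \<Rightarrow> int" where
  "QO m a c d = c * (2 * c - 1) - 2 * c - (a + d) * (2 * m - a - d - 2 * c + 1) - a * d"

lemma comb1:
  fixes A0 A1 N1 A2 A3 A4 A5 R Q PA PB Z Y0 Y1 Y2 Y3 Y4 Y5 :: qf
  assumes h1: "A0 * Y0 + A1 * Y1 * N1 + A2 * Y2 + A5 * Y5 = R"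
  and h2: "- (A1 * Y1 * Z) - A3 * Y3 + A4 * Y4 = 0"
  shows "A0 * (Q * Y0) * PA + A1 * (Q * Y1) * (N1 * PA - Z * PB) + A2 * (Q * Y2) * PA - A3 * (Q * Y3) * PB + A4 * (Q * Y4) * PB + A5 * (Q * Y5) * PA = R * Q * PA"
proof -
  have "A0 * (Q * Y0) * PA + A1 * (Q * Y1) * (N1 * PA - Z * PB) + A2 * (Q * Y2) * PA - A3 * (Q * Y3) * PB + A4 * (Q * Y4) * PB + A5 * (Q * Y5) * PA
     = Q * PA * (A0 * Y0 + A1 * Y1 * N1 + A2 * Y2 + A5 * Y5) + Q * PB * (- (A1 * Y1 * Z) - A3 * Y3 + A4 * Y4)"
    by algebra
  also have "\<dots> = R * Q * PA" unfolding h1 h2 by simp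
  finally show ?thesis .
qed

lemma qid1:
  fixes a c d m :: int and PA PB :: qf
  defines "N \<equiv> 2 * m - a - d - 2 * c"
  shows "qint a * qp (QE m (a - 1) c d) * PA
   + qp (- 2 * a) * qp (QE m a c d) * (qint (N + 1) * PA - qp (1 - 2 * N) * qint (N - 1) * PB)
   + qp (- 2 * a) * (qp (2 * (a + d + 2 * c - 2 * m - 1)) * qint d) * qp (QE m a c (d - 1)) * PA
   - qp (- 2 * a) * (qp (2 * (a + d + 2 * c - 2 * m + 1)) * qint d * qp (- 4 * m)) * qp (QE m a (c + 1) (d - 1)) * PB
   + (qp (- 1 - 3 * a) - qp (- 1 - a) * qp (2 - 4 * m + 4 * c)) / DD * qp (QE m (a + 1) c d) * PB
   + qp (- 1 - a) * ((qp (4 * c) - 1) * qp (-2)) / DD * qp (QE m (a + 1) (c - 1) d) * PA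
   = qint (2 * m + 1) * qp (QO m a c d) * PA"
proof -
  define Q where "Q = qp (QO m a c d)"
  have e0: "qp (QE m (a - 1) c d) = Q * qp (N + 1 + d + 2 * c)"
    unfolding Q_def qp_add[symmetric] by (simp add: QE_def QO_def N_def algebra_simps)
  have e1: "qp (QE m a c d) = Q * qp (2 * c + a + d)"
    unfolding Q_def qp_add[symmetric] by (simp add: QE_def QO_def N_def algebra_simps)
  have e2: "qp (QE m a c (d - 1)) = Q * qp (N + 1 + a + 2 * c)"
    unfolding Q_def qp_add[symmetric] by (simp add: QE_def QO_def N_def algebra_simps)
  have e3: "qp (QE m a (c + 1) (d - 1)) = Q * qp (6 * c + 2 * a + 2 * d + N + a)"
    unfolding Q_def qp_add[symmetric] by (simp add: QE_def QO_def N_def algebra_simps)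
  have e4: "qp (QE m (a + 1) c d) = Q * qp (2 * c + 2 * a + d - N + 1)"
    unfolding Q_def qp_add[symmetric] by (simp add: QE_def QO_def N_def algebra_simps)
  have e5: "qp (QE m (a + 1) (c - 1) d) = Q * qp (- 2 * c + 2 - N - d)"
    unfolding Q_def qp_add[symmetric] by (simp add: QE_def QO_def N_def algebra_simps)
  have B1: "qint a * qp (N + 1 + d + 2 * c)
   + qp (- 2 * a) * qp (2 * c + a + d) * qint (N + 1)
   + qp (- 2 * a) * (qp (2 * (a + d + 2 * c - 2 * m - 1)) * qint d) * qp (N + 1 + a + 2 * c)
   + qp (- 1 - a) * ((qp (4 * c) - 1) * qp (-2)) / DD * qp (- 2 * c + 2 - N - d)
   = qint (2 * m + 1)"
    unfolding N_def
    by ((simp add: qint_DD field_simps)?; (simp add: DD_qp qpsplit)?; (simp add: field_simps)?; algebra?)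
  have Bm: "- (qp (- 2 * a) * qp (2 * c + a + d) * (qp (1 - 2 * N) * qint (N - 1)))
   - qp (- 2 * a) * (qp (2 * (a + d + 2 * c - 2 * m + 1)) * qint d * qp (- 4 * m)) * qp (6 * c + 2 * a + 2 * d + N + a)
   + (qp (- 1 - 3 * a) - qp (- 1 - a) * qp (2 - 4 * m + 4 * c)) / DD * qp (2 * c + 2 * a + d - N + 1) = 0"
    unfolding N_def
    by ((simp add: qint_DD field_simps)?; (simp add: DD_qp qpsplit)?; (simp add: field_simps)?; algebra?)
  show ?thesis
    unfolding e0 e1 e2 e3 e4 e5 Q_def[symmetric]
    by (rule comb1[OF B1 Bm])
qed


definition fE :: "int \<Rightarrow> qf \<Rightarrow> int \<Rightarrow> int \<Rightarrow> int \<Rightarrow> qf" where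
  "fE m \<kappa> a c d = qp (QE m a c d) * pdiv (2 * m - a - d - 2 * c) \<kappa>"
definition fO :: "int \<Rightarrow> qf \<Rightarrow> int \<Rightarrow> int \<Rightarrow> int \<Rightarrow> qf" where
  "fO m \<kappa> a c d = qp (QO m a c d) * pdiv (2 * m - a - d - 2 * c + 1) \<kappa>"

definition wE :: "int \<Rightarrow> qf \<Rightarrow> pt \<Rightarrow> qf" where
  "wE m \<kappa> p = (case p of (a, c, d) \<Rightarrow> if 0 \<le> a \<and> 0 \<le> c \<and> 0 \<le> d then fE m \<kappa> a c d else 0)"
definition wO :: "int \<Rightarrow> qf \<Rightarrow> pt \<Rightarrow> qf" where
  "wO m \<kappa> p = (case p of (a, c, d) \<Rightarrow> if 0 \<le> a \<and> 0 \<le> c \<and> 0 \<le> d then fO m \<kappa> a c d else 0)"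

lemma lcomb_t_eval: "lcomb (tlist k \<mu> \<kappa>) w (a, c, d) =
     qint a * w (a - 1, c, d)
   + \<kappa> * qp (- 2 * a) * w (a, c, d)
   + qp (- 2 * a) * (qp (2 * (a + d + 2 * c + k - 1)) * qint d) * w (a, c, d - 1)
   - qp (- 2 * a) * (qp (2 * (a + d + 2 * c + k + 1)) * qint d * qp (4 * \<mu> - 4)) * w (a, c + 1, d - 1)
   + (qp (- 1 - 3 * a) - qp (- 1 - a) * qp (4 * \<mu> + 4 * c - 2)) / DD * w (a + 1, c, d)
   + qp (- 1 - a) * ((qp (4 * c) - 1) * qp (-2)) / DD * w (a + 1, c - 1, d)"
  by (simp add: tlist_def diff_divide_distrib algebra_simps)

lemma lcomb_t_eval': "lcomb (tlist k \<mu> \<kappa>) w (a, c, d) =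
     qint a * w (a - 1, c, d)
   + \<kappa> * qp (- 2 * a) * w (a, c, d)
   + qp (- 2 * a) * qp (2 * (a + d + 2 * c + k - 1)) * (qint d * w (a, c, d - 1))
   - qp (- 2 * a) * qp (2 * (a + d + 2 * c + k + 1)) * qp (4 * \<mu> - 4) * (qint d * w (a, c + 1, d - 1))
   + (qp (- 1 - 3 * a) - qp (- 1 - a) * qp (4 * \<mu> + 4 * c - 2)) / DD * w (a + 1, c, d)
   + qp (- 1 - a) * qp (-2) / DD * ((qp (4 * c) - 1) * w (a + 1, c - 1, d))"
  unfolding lcomb_t_eval by (simp add: algebra_simps diff_divide_distrib)

lemma wE_nn: "0 \<le> a \<Longrightarrow> 0 \<le> c \<Longrightarrow> 0 \<le> d \<Longrightarrow> wE m \<kappa> (a, c, d) = fE m \<kappa> a c d"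
  by (simp add: wE_def)
lemma wO_nn: "0 \<le> a \<Longrightarrow> 0 \<le> c \<Longrightarrow> 0 \<le> d \<Longrightarrow> wO m \<kappa> (a, c, d) = fO m \<kappa> a c d"
  by (simp add: wO_def)

lemma guard_a: "0 \<le> a \<Longrightarrow> 0 \<le> c \<Longrightarrow> 0 \<le> d \<Longrightarrow> qint a * wE m \<kappa> (a - 1, c, d) = qint a * fE m \<kappa> (a - 1) c d"
  by (cases "a = 0") (simp_all add: wE_def)
lemma guard_d: "0 \<le> a \<Longrightarrow> 0 \<le> c \<Longrightarrow> 0 \<le> d \<Longrightarrow> qint d * wE m \<kappa> (a, c', d - 1) = qint d * fE m \<kappa> a c' (d - 1)" if "0 \<le> c'"
  using that by (cases "d = 0") (simp_all add: wE_def)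
lemma guard_c: "0 \<le> a \<Longrightarrow> 0 \<le> c \<Longrightarrow> 0 \<le> d \<Longrightarrow> (qp (4 * c) - 1) * wE m \<kappa> (a + 1, c - 1, d) = (qp (4 * c) - 1) * fE m \<kappa> (a + 1) (c - 1) d"
  by (cases "c = 0") (simp_all add: wE_def)

lemma ident1:
  assumes "0 \<le> a" "0 \<le> c" "0 \<le> d"
  shows "lcomb (tlist (- 2 * m) (1 - m) \<kappa>) (wE m \<kappa>) (a, c, d) = qint (2 * m + 1) * wO m \<kappa> (a, c, d)"
proof -
  define N where "N = 2 * m - a - d - 2 * c"
  define P1 where "P1 = pdiv (N + 1) \<kappa>"
  define P0 where "P0 = pdiv N \<kappa>"
  define Pm where "Pm = pdiv (N - 1) \<kappa>"
  have rec: "\<kappa> * P0 = qint (N + 1) * P1 - qp (1 - 2 * N) * qint (N - 1) * Pm"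
    using pdiv_rec[of N \<kappa>] by (simp add: P0_def P1_def Pm_def)
  have f0: "fE m \<kappa> (a - 1) c d = qp (QE m (a - 1) c d) * P1" by (simp add: fE_def P1_def N_def algebra_simps)
  have f1: "fE m \<kappa> a c d = qp (QE m a c d) * P0" by (simp add: fE_def P0_def N_def algebra_simps)
  have f2: "fE m \<kappa> a c (d - 1) = qp (QE m a c (d - 1)) * P1" by (simp add: fE_def P1_def N_def algebra_simps)
  have f3: "fE m \<kappa> a (c + 1) (d - 1) = qp (QE m a (c + 1) (d - 1)) * Pm" by (simp add: fE_def Pm_def N_def algebra_simps)
  have f4: "fE m \<kappa> (a + 1) c d = qp (QE m (a + 1) c d) * Pm" by (simp add: fE_def Pm_def N_def algebra_simps)
  have f5: "fE m \<kappa> (a + 1) (c - 1) d = qp (QE m (a + 1) (c - 1) d) * P1" by (simp add: fE_def P1_def N_def algebra_simps)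
  have fo: "fO m \<kappa> a c d = qp (QO m a c d) * P1" by (simp add: fO_def P1_def N_def algebra_simps)
  note Q = qid1[where a=a and c=c and d=d and m=m and PA=P1 and PB=Pm, folded N_def]
  have kt: "\<kappa> * qp (- 2 * a) * (qp (QE m a c d) * P0) = qp (- 2 * a) * qp (QE m a c d) * (qint (N + 1) * P1 - qp (1 - 2 * N) * qint (N - 1) * Pm)"
    by (subst rec[symmetric]) (simp only: mult_ac)
  have x1: "qp (2 * (a + d + 2 * c + - 2 * m - 1)) = qp (2 * (a + d + 2 * c - 2 * m - 1))" by simp
  have x2: "qp (2 * (a + d + 2 * c + - 2 * m + 1)) = qp (2 * (a + d + 2 * c - 2 * m + 1))" by simp
  have x3: "qp (4 * (1 - m) - 4) = qp (- 4 * m)" by simp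
  have x4: "qp (4 * (1 - m) + 4 * c - 2) = qp (2 - 4 * m + 4 * c)" by (simp add: algebra_simps)
  show ?thesis
    unfolding lcomb_t_eval'
    using assms
    apply (simp only: guard_a guard_c guard_d[of c] guard_d[of "c + 1"] wE_nn wO_nn f0 f1 f2 f3 f4 f5 fo)
    apply (simp only: kt x1 x2 x3 x4)
    apply (simp only: mult.assoc[of "qint (2 * m + 1)", symmetric] Q[symmetric])
    apply (simp only: divide_inverse)
    apply algebra
    done
qed

lemma qid2:
  fixes a c d m :: int and PA PB :: qf
  defines "G \<equiv> 2 * m + 1 - a - d - 2 * c"
  shows "qint a * (qp (QO m (a - 1) c d) * PA)
   + qp (- 2 * a) * qp (QO m a c d) * (qint (G + 1) * PA - qp (1 - 2 * G) * qint (G - 1) * PB)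
   + qp (- 2 * a) * qp (2 * (a + d + 2 * c - 2 * m - 2)) * (qint d * (qp (QO m a c (d - 1)) * PA))
   - qp (- 2 * a) * qp (2 * (a + d + 2 * c - 2 * m)) * qp (- 4 * m) * (qint d * (qp (QO m a (c + 1) (d - 1)) * PB))
   + (qp (- 1 - 3 * a) - qp (- 1 - a) * qp (2 - 4 * m + 4 * c)) / DD * (qp (QO m (a + 1) c d) * PB)
   + qp (- 1 - a) * qp (-2) / DD * ((qp (4 * c) - 1) * (qp (QO m (a + 1) (c - 1) d) * PA))
   = qint (2 * m + 2) * (qp (QE (m + 1) a c d) * PA - qp (- 4 * m) * (qp (QE (m + 1) a (c + 1) d) * PB))
   + qint (2 * m + 1) * (qp (2 - 4 * m + 4 * c) * (qp (QE m a c d) * PB) - qp (-2) * ((qp (4 * c) - 1) * (qp (QE m a (c - 1) d) * PA)))"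
proof -
  define Q where "Q = qp (QO m a c d)"
  have e0: "qp (QO m (a - 1) c d) = Q * qp (G + 1 - a)"
    unfolding Q_def qp_add[symmetric] by (simp add: QE_def QO_def G_def algebra_simps)
  have e2: "qp (QO m a c (d - 1)) = Q * qp (G + 1 - d)"
    unfolding Q_def qp_add[symmetric] by (simp add: QE_def QO_def G_def algebra_simps)
  have e3: "qp (QO m a (c + 1) (d - 1)) = Q * qp (4 * c + 2 * a + d + G - 2)"
    unfolding Q_def qp_add[symmetric] by (simp add: QE_def QO_def G_def algebra_simps)
  have e4: "qp (QO m (a + 1) c d) = Q * qp (a - G + 1)"
    unfolding Q_def qp_add[symmetric] by (simp add: QE_def QO_def G_def algebra_simps)
  have e5: "qp (QO m (a + 1) (c - 1) d) = Q * qp (- 4 * c + 4 - a - 2 * d - G)"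
    unfolding Q_def qp_add[symmetric] by (simp add: QE_def QO_def G_def algebra_simps)
  have r0: "qp (QE (m + 1) a c d) = Q * qp (2 * c - a - d)"
    unfolding Q_def qp_add[symmetric] by (simp add: QE_def QO_def G_def algebra_simps)
  have r1: "qp (QE (m + 1) a (c + 1) d) = Q * qp (6 * c + 1 + a + d)"
    unfolding Q_def qp_add[symmetric] by (simp add: QE_def QO_def G_def algebra_simps)
  have r2: "qp (QE m a c d) = Q * qp (2 * c + a + d)"
    unfolding Q_def qp_add[symmetric] by (simp add: QE_def QO_def G_def algebra_simps)
  have r3: "qp (QE m a (c - 1) d) = Q * qp (- 2 * c + 3 - a - d)"
    unfolding Q_def qp_add[symmetric] by (simp add: QE_def QO_def G_def algebra_simps)
  define B1L where "B1L = qint a * qp (G + 1 - a) + qp (- 2 * a) * qint (G + 1)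
     + qp (- 2 * a) * qp (2 * (a + d + 2 * c - 2 * m - 2)) * qint d * qp (G + 1 - d)
     + qp (- 1 - a) * qp (-2) / DD * (qp (4 * c) - 1) * qp (- 4 * c + 4 - a - 2 * d - G)"
  define B1R where "B1R = qint (2 * m + 2) * qp (2 * c - a - d) - qint (2 * m + 1) * qp (-2) * (qp (4 * c) - 1) * qp (- 2 * c + 3 - a - d)"
  define BmL where "BmL = - (qp (- 2 * a) * qp (1 - 2 * G) * qint (G - 1))
     - qp (- 2 * a) * qp (2 * (a + d + 2 * c - 2 * m)) * qp (- 4 * m) * qint d * qp (4 * c + 2 * a + d + G - 2)
     + (qp (- 1 - 3 * a) - qp (- 1 - a) * qp (2 - 4 * m + 4 * c)) / DD * qp (a - G + 1)"
  define BmR where "BmR = - (qint (2 * m + 2) * qp (- 4 * m) * qp (6 * c + 1 + a + d)) + qint (2 * m + 1) * qp (2 - 4 * m + 4 * c) * qp (2 * c + a + d)"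
  have B1: "B1L = B1R" unfolding B1L_def B1R_def G_def
    by ((simp add: qint_DD field_simps)?; (simp add: DD_qp qpsplit)?; (simp add: field_simps)?; algebra?)
  have Bm: "BmL = BmR" unfolding BmL_def BmR_def G_def
    by ((simp add: qint_DD field_simps)?; (simp add: DD_qp qpsplit)?; (simp add: field_simps)?; algebra?)
  show ?thesis
    unfolding e0 e2 e3 e4 e5 r0 r1 r2 r3 Q_def[symmetric]
    apply (rule trans[of _ "Q * PA * B1L + Q * PB * BmL"])
    apply (unfold B1L_def BmL_def divide_inverse; algebra)
    apply (unfold B1 Bm B1R_def BmR_def divide_inverse; algebra)
    done
qed

lemma lcomb_m_eval: "lcomb (mlist \<mu>) w (a, c, d) = w (a, c, d) - qp (4 * \<mu> - 4) * w (a, c + 1, d)"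
  by (simp add: mlist_def)
lemma lcomb_k_eval: "lcomb (klist \<mu>) w (a, c, d) = qp (4 * \<mu> + 4 * c - 2) * w (a, c, d) - qp (-2) * ((qp (4 * c) - 1) * w (a, c - 1, d))"
  by (simp add: klist_def algebra_simps)

lemma guardO_a: "0 \<le> a \<Longrightarrow> 0 \<le> c \<Longrightarrow> 0 \<le> d \<Longrightarrow> qint a * wO m \<kappa> (a - 1, c, d) = qint a * fO m \<kappa> (a - 1) c d"
  by (cases "a = 0") (simp_all add: wO_def)
lemma guardO_d: "0 \<le> a \<Longrightarrow> 0 \<le> c \<Longrightarrow> 0 \<le> d \<Longrightarrow> qint d * wO m \<kappa> (a, c', d - 1) = qint d * fO m \<kappa> a c' (d - 1)" if "0 \<le> c'"
  using that by (cases "d = 0") (simp_all add: wO_def)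
lemma guardO_c: "0 \<le> a \<Longrightarrow> 0 \<le> c \<Longrightarrow> 0 \<le> d \<Longrightarrow> (qp (4 * c) - 1) * wO m \<kappa> (a + 1, c - 1, d) = (qp (4 * c) - 1) * fO m \<kappa> (a + 1) (c - 1) d"
  by (cases "c = 0") (simp_all add: wO_def)
lemma guardE_c: "0 \<le> a \<Longrightarrow> 0 \<le> c \<Longrightarrow> 0 \<le> d \<Longrightarrow> (qp (4 * c) - 1) * wE m \<kappa> (a, c - 1, d) = (qp (4 * c) - 1) * fE m \<kappa> a (c - 1) d"
  by (cases "c = 0") (simp_all add: wE_def)

lemma ident2:
  assumes "0 \<le> a" "0 \<le> c" "0 \<le> d"
  shows "lcomb (tlist (- 2 * m - 1) (1 - m) \<kappa>) (wO m \<kappa>) (a, c, d) =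
     qint (2 * m + 2) * lcomb (mlist (1 - m)) (wE (m + 1) \<kappa>) (a, c, d)
   + qint (2 * m + 1) * lcomb (klist (1 - m)) (wE m \<kappa>) (a, c, d)"
proof -
  define G where "G = 2 * m + 1 - a - d - 2 * c"
  define P1 where "P1 = pdiv (G + 1) \<kappa>"
  define P0 where "P0 = pdiv G \<kappa>"
  define Pm where "Pm = pdiv (G - 1) \<kappa>"
  have rec: "\<kappa> * P0 = qint (G + 1) * P1 - qp (1 - 2 * G) * qint (G - 1) * Pm"
    using pdiv_rec[of G \<kappa>] by (simp add: P0_def P1_def Pm_def)
  have f0: "fO m \<kappa> (a - 1) c d = qp (QO m (a - 1) c d) * P1" by (simp add: fO_def P1_def G_def algebra_simps)
  have f1: "fO m \<kappa> a c d = qp (QO m a c d) * P0" by (simp add: fO_def P0_def G_def algebra_simps)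
  have f2: "fO m \<kappa> a c (d - 1) = qp (QO m a c (d - 1)) * P1" by (simp add: fO_def P1_def G_def algebra_simps)
  have f3: "fO m \<kappa> a (c + 1) (d - 1) = qp (QO m a (c + 1) (d - 1)) * Pm" by (simp add: fO_def Pm_def G_def algebra_simps)
  have f4: "fO m \<kappa> (a + 1) c d = qp (QO m (a + 1) c d) * Pm" by (simp add: fO_def Pm_def G_def algebra_simps)
  have f5: "fO m \<kappa> (a + 1) (c - 1) d = qp (QO m (a + 1) (c - 1) d) * P1" by (simp add: fO_def P1_def G_def algebra_simps)
  have g0: "fE (m + 1) \<kappa> a c d = qp (QE (m + 1) a c d) * P1" by (simp add: fE_def P1_def G_def algebra_simps)
  have g1: "fE (m + 1) \<kappa> a (c + 1) d = qp (QE (m + 1) a (c + 1) d) * Pm" by (simp add: fE_def Pm_def G_def algebra_simps)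
  have g2: "fE m \<kappa> a c d = qp (QE m a c d) * Pm" by (simp add: fE_def Pm_def G_def algebra_simps)
  have g3: "fE m \<kappa> a (c - 1) d = qp (QE m a (c - 1) d) * P1" by (simp add: fE_def P1_def G_def algebra_simps)
  note Q = qid2[where a=a and c=c and d=d and m=m and PA=P1 and PB=Pm, folded G_def]
  have kt: "\<kappa> * qp (- 2 * a) * (qp (QO m a c d) * P0) = qp (- 2 * a) * qp (QO m a c d) * (qint (G + 1) * P1 - qp (1 - 2 * G) * qint (G - 1) * Pm)"
    by (subst rec[symmetric]) (simp only: mult_ac)
  have x1: "qp (2 * (a + d + 2 * c + (- 2 * m - 1) - 1)) = qp (2 * (a + d + 2 * c - 2 * m - 2))" by (simp add: algebra_simps)
  have x2: "qp (2 * (a + d + 2 * c + (- 2 * m - 1) + 1)) = qp (2 * (a + d + 2 * c - 2 * m))" by (simp add: algebra_simps)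
  have x3: "qp (4 * (1 - m) - 4) = qp (- 4 * m)" by simp
  have x4: "qp (4 * (1 - m) + 4 * c - 2) = qp (2 - 4 * m + 4 * c)" by (simp add: algebra_simps)
  show ?thesis
    unfolding lcomb_t_eval' lcomb_m_eval lcomb_k_eval
    using assms
    apply (simp only: guardO_a guardO_c guardO_d[of c] guardO_d[of "c + 1"] guardE_c wE_nn wO_nn f0 f1 f2 f3 f4 f5 g0 g1 g2 g3 kt)
    apply (simp only: x1 x2 x3 x4 Q)
    done
qed

lemma qint_neg: "qint (- n) = - qint n"
proof -
  have "qq powi (- n) - qq powi (- (- n)) = - (qq powi n - qq powi (- n))" by simp
  thus ?thesis unfolding qint_def by (metis minus_divide_left)
qed

lemma fsupp_box: "(\<And>p. w p \<noteq> 0 \<Longrightarrow> p \<in> {0..B} \<times> {0..B} \<times> {0..B}) \<Longrightarrow> fsupp w"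
  unfolding fsupp_def by (rule finite_subset[of _ "{0..B} \<times> {0..B} \<times> {0..B}"]) auto

lemma wE_supp: "wE m \<kappa> p \<noteq> 0 \<Longrightarrow> nonneg p \<and> p \<in> {0..2 * \<bar>m\<bar> + 2} \<times> {0..2 * \<bar>m\<bar> + 2} \<times> {0..2 * \<bar>m\<bar> + 2}"
  by (cases p) (auto simp: wE_def fE_def pdiv_def split: if_splits)
lemma wO_supp: "wO m \<kappa> p \<noteq> 0 \<Longrightarrow> nonneg p \<and> p \<in> {0..2 * \<bar>m\<bar> + 2} \<times> {0..2 * \<bar>m\<bar> + 2} \<times> {0..2 * \<bar>m\<bar> + 2}"
  by (cases p) (auto simp: wO_def fO_def pdiv_def split: if_splits)

lemma fsupp_wE: "fsupp (wE m \<kappa>)" using wE_supp by (blast intro: fsupp_box)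
lemma fsupp_wO: "fsupp (wO m \<kappa>)" using wO_supp by (blast intro: fsupp_box)

context urep begin

lemma nonneg_ex: "nonneg p \<Longrightarrow> \<exists>a c d. p = (int a, int c, int d)"
  by (cases p) (auto intro!: exI[of _ "nat _"])

lemma t_SS:
  assumes fs: "fsupp w" and nn: "\<And>p. w p \<noteq> 0 \<Longrightarrow> nonneg p"
  shows "(F + Ec + sm \<kappa> Ki) * SS k \<mu> w = SS (k - 1) \<mu> (lcomb (tlist k \<mu> \<kappa>) w)"
proof -
  have "(F + Ec + sm \<kappa> Ki) * SS k \<mu> w = Sum_any (\<lambda>p. sm (w p) ((F + Ec + sm \<kappa> Ki) * Bx k \<mu> p))"
    by (rule SS_left[OF fs])
  also have "\<dots> = SS (k - 1) \<mu> (lcomb (tlist k \<mu> \<kappa>) w)"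
  proof (rule SS_lift[OF fs])
    fix p assume "w p \<noteq> 0"
    then obtain a c d where "p = (int a, int c, int d)" using nn nonneg_ex by blast
    thus "(F + Ec + sm \<kappa> Ki) * Bx k \<mu> p = (\<Sum>j\<leftarrow>tlist k \<mu> \<kappa>. sm (snd j p) (Bx (k - 1) \<mu> (padd p (fst j))))"
      by (simp only: tBx_nat)
  qed
  finally show ?thesis .
qed

lemma kBx_nat: "Bx (k + 2) \<mu> (int a, int c, int d) = (\<Sum>j\<leftarrow>klist \<mu>. sm (snd j (int a, int c, int d)) (Bx k \<mu> (padd (int a, int c, int d) (fst j))))"
proof -
  have A: "Bx (k + 2) \<mu> (int a, int c, int d) = dE a * hb \<mu> c * KP (int a + int d + 2 * int c + k + 2) * dF d"
    by (simp add: Bx_nat TT_def add.assoc)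
  have B1: "Bx k \<mu> (int a + 0, int c + 0, int d + 0) = TT \<mu> a c (int a + int d + 2 * int c + k + 2 - 2) d"
    by (simp add: Bx_nat)
  have B2: "Bx k \<mu> (int a + 0, int c + 1, int d + 0) = TT \<mu> a (Suc c) (int a + int d + 2 * int c + k + 2) d"
    using Bx_nat[of k \<mu> a "Suc c" d] by (simp add: algebra_simps)
  show ?thesis unfolding A P_alpha klist_def
    by (simp only: list.map sum_list_simps padd.simps fst_conv snd_conv prod.case B1 B2) (simp add: sm_uminus_left)
qed

lemma mBx_nat: "Bx k (\<mu> - 1) (int a, int c, int d) = (\<Sum>j\<leftarrow>mlist \<mu>. sm (snd j (int a, int c, int d)) (Bx k \<mu> (padd (int a, int c, int d) (fst j))))"
proof (cases c)
  case 0
  thus ?thesis using Bx_nat[of k "\<mu> - 1" a 0 d] Bx_nat[of k \<mu> a 0 d] by (simp add: mlist_def Bx_neg TT_def)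
next
  case (Suc c')
  have "Bx k (\<mu> - 1) (int a, int c, int d) = dE a * (hb \<mu> c - sm (qp (4 * \<mu> - 4)) (Ki * Ki * hb \<mu> c')) * KP (int a + int d + 2 * int c + k) * dF d"
    by (simp only: Bx_nat TT_def Suc hb_shift)
  also have "\<dots> = TT \<mu> a c (int a + int d + 2 * int c + k) d - sm (qp (4 * \<mu> - 4)) (dE a * (Ki * Ki * hb \<mu> c' * KP (int a + int d + 2 * int c + k)) * dF d)"
    by (simp add: TT_def right_diff_distrib left_diff_distrib sm_diff mult.assoc)
  also have "\<dots> = TT \<mu> a c (int a + int d + 2 * int c + k) d - sm (qp (4 * \<mu> - 4)) (TT \<mu> a c' (int a + int d + 2 * int c + k - 2) d)"
    by (simp only: KiKi_hb_KP' TT_def mult.assoc)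
  also have "\<dots> = (\<Sum>j\<leftarrow>mlist \<mu>. sm (snd j (int a, int c, int d)) (Bx k \<mu> (padd (int a, int c, int d) (fst j))))"
  proof -
    have "Bx k \<mu> (int a + 0, int c + - 1, int d + 0) = TT \<mu> a c' (int a + int d + 2 * int c + k - 2) d"
      using Bx_nat[of k \<mu> a c' d] Suc by (simp add: algebra_simps)
    thus ?thesis by (simp add: mlist_def Bx_nat sm_uminus_left)
  qed
  finally show ?thesis .
qed

lemma k_SS:
  assumes fs: "fsupp w" and nn: "\<And>p. w p \<noteq> 0 \<Longrightarrow> nonneg p"
  shows "SS (k + 2) \<mu> w = SS k \<mu> (lcomb (klist \<mu>) w)"
  unfolding SS_def[of "k + 2"]
proof (rule SS_lift[OF fs])
  fix p assume "w p \<noteq> 0"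
  then obtain a c d where "p = (int a, int c, int d)" using nn nonneg_ex by blast
  thus "Bx (k + 2) \<mu> p = (\<Sum>j\<leftarrow>klist \<mu>. sm (snd j p) (Bx k \<mu> (padd p (fst j))))"
    by (simp only: kBx_nat)
qed

lemma m_SS:
  assumes fs: "fsupp w" and nn: "\<And>p. w p \<noteq> 0 \<Longrightarrow> nonneg p"
  shows "SS k (\<mu> - 1) w = SS k \<mu> (lcomb (mlist \<mu>) w)"
  unfolding SS_def[of k "\<mu> - 1"]
proof (rule SS_lift[OF fs])
  fix p assume "w p \<noteq> 0"
  then obtain a c d where "p = (int a, int c, int d)" using nn nonneg_ex by blast
  thus "Bx k (\<mu> - 1) p = (\<Sum>j\<leftarrow>mlist \<mu>. sm (snd j p) (Bx k \<mu> (padd p (fst j))))"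
    by (simp only: mBx_nat)
qed

end

context urep begin

lemma tel_eq: "tel ph E F Ki \<kappa> = F + Ec + sm \<kappa> Ki" by (simp add: tel_def sm_def)

lemma t_comm_prod: "t * prod_list (map (\<lambda>j. t - ph (f j)) xs) = prod_list (map (\<lambda>j. t - ph (f j)) xs) * t"
proof (induction xs)
  case (Cons x xs)
  have c1: "t * (t - ph (f x)) = (t - ph (f x)) * t" by (simp add: right_diff_distrib left_diff_distrib ph_comm)
  show ?case by (simp add: mult.assoc[symmetric] c1) (simp add: mult.assoc Cons)
qed simp

lemma qfact_2: "qfact (2 * m + 1) = qfact (2 * m) * qint (2 * int m + 1)"
  using qfact_Suc[of "2 * m"] by (simp add: add.commute)
lemma qfact_3: "qfact (2 * Suc m) = qfact (2 * m + 1) * qint (2 * int m + 2)"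
  using qfact_Suc[of "2 * m + 1"] by (simp add: algebra_simps)

lemma L_odd: "tdot_odd ph t m = sm (inverse (qint (2 * int m + 1))) (t * tdot_even ph t m)"
proof -
  have e: "inverse (qfact (2 * m + 1)) = inverse (qint (2 * int m + 1)) * inverse (qfact (2 * m))"
    by (simp only: qfact_2 inverse_mult_distrib) (rule mult.commute)
  show ?thesis by (simp only: tdot_odd_def tdot_even_def sm_def[symmetric] sm_right sm_sm e)
qed

lemma tprod_Suc: "tprod ph t (Suc m) = (t + ph (qint (2 * int m + 1))) * tprod ph t m * (t - ph (qint (2 * int m + 1)))"
proof -
  have l: "[- int (Suc m) + 1 .. int (Suc m)] = - int m # [- int m + 1 .. int m] @ [int m + 1]"
    using upto_rec1[of "- int m" "int m + 1"] upto_rec2[of "- int m + 1" "int m + 1"] by (simp add: add.commute)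
  have f1: "t - ph (qint (- (2 * int m) - 1)) = t + ph (qint (2 * int m + 1))"
  proof -
    have "qint (- (2 * int m) - 1) = - qint (2 * int m + 1)" using qint_neg[of "2 * int m + 1"] by simp
    thus ?thesis by (simp add: ph_uminus)
  qed
  have f2: "qint (1 + 2 * int m) = qint (2 * int m + 1)" by (simp add: add.commute)
  show ?thesis unfolding tprod_def l by (simp add: f1 f2 mult.assoc)
qed

lemma L_even: "tdot_even ph t (Suc m) = sm (inverse (qint (2 * int m + 2))) (t * tdot_odd ph t m - sm (qint (2 * int m + 1)) (tdot_even ph t m))"
proof -
  define P where "P = tprod ph t m"
  define s where "s = qint (2 * int m + 1)"
  define r where "r = qint (2 * int m + 2)"
  have s0: "s \<noteq> 0" "r \<noteq> 0" by (simp_all add: s_def r_def qint_ne0)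
  have tP: "t * P = P * t" unfolding P_def tprod_def by (rule t_comm_prod)
  have A: "tprod ph t (Suc m) = (t + sm s 1) * (P * (t - sm s 1))"
    by (simp only: tprod_Suc P_def[symmetric] s_def[symmetric] ph_sm mult.assoc)
  have B: "P * (t - sm s 1) = t * P - sm s P" by (simp add: right_diff_distrib tP)
  have C: "(t + sm s 1) * (t * P - sm s P) = t * (t * P) - sm (s * s) P"
    by (simp add: distrib_right right_diff_distrib sm_add sm_diff)
  have tp: "tprod ph t (Suc m) = t * (t * P) - sm (s * s) P" using A B C by simp
  have q3: "qfact (2 * Suc m) = qfact (2 * m) * s * r" by (simp only: qfact_3 qfact_2 s_def r_def)
  have q2: "qfact (2 * m + 1) = qfact (2 * m) * s" by (simp only: qfact_2 s_def)
  have e1: "inverse (qfact (2 * Suc m)) = inverse r * inverse (qfact (2 * m + 1))"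
    by (simp only: qfact_3 r_def[symmetric] inverse_mult_distrib) (rule mult.commute)
  have e2: "inverse r * inverse (qfact (2 * m + 1)) * (s * s) = inverse r * (s * inverse (qfact (2 * m)))"
    using s0 unfolding q2 by (simp add: field_simps)
  have "tdot_even ph t (Suc m) = sm (inverse (qfact (2 * Suc m))) (t * (t * P) - sm (s * s) P)"
    by (simp only: tdot_even_def sm_def[symmetric] tp)
  also have "\<dots> = sm (inverse r * inverse (qfact (2 * m + 1))) (t * (t * P)) - sm (inverse r * (s * inverse (qfact (2 * m)))) P"
    by (simp only: sm_diff sm_sm e1 e2)
  also have "\<dots> = sm (inverse r) (t * tdot_odd ph t m - sm s (tdot_even ph t m))"
    by (simp only: tdot_odd_def tdot_even_def sm_def[symmetric] P_def[symmetric] sm_diff sm_sm sm_right)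
  finally show ?thesis by (simp only: r_def s_def)
qed

end

lemma nn_wE: "wE m \<kappa> p \<noteq> 0 \<Longrightarrow> nonneg p" using wE_supp by blast
lemma nn_wO: "wO m \<kappa> p \<noteq> 0 \<Longrightarrow> nonneg p" using wO_supp by blast

lemma fsupp_scale: "fsupp w \<Longrightarrow> fsupp (\<lambda>p. x * w p)"
  unfolding fsupp_def by (rule finite_subset[rotated], assumption) auto

context urep begin

definition RE :: "qf \<Rightarrow> nat \<Rightarrow> 'a" where "RE \<kappa> m = SS (- 2 * int m) (1 - int m) (wE (int m) \<kappa>)"
definition RO :: "qf \<Rightarrow> nat \<Rightarrow> 'a" where "RO \<kappa> m = SS (- 2 * int m - 1) (1 - int m) (wO (int m) \<kappa>)"

lemma odd_step:
  assumes h: "tdot_even ph (tel ph E F Ki \<kappa>) m = RE \<kappa> m"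
  shows "tdot_odd ph (tel ph E F Ki \<kappa>) m = RO \<kappa> m"
proof -
  define s where "s = qint (2 * int m + 1)"
  have s0: "s \<noteq> 0" by (simp add: s_def qint_ne0)
  have "tel ph E F Ki \<kappa> * RE \<kappa> m = SS (- 2 * int m - 1) (1 - int m) (lcomb (tlist (- 2 * int m) (1 - int m) \<kappa>) (wE (int m) \<kappa>))"
    unfolding RE_def tel_eq by (rule t_SS[OF fsupp_wE nn_wE])
  also have "\<dots> = SS (- 2 * int m - 1) (1 - int m) (\<lambda>p. s * wO (int m) \<kappa> p)"
  proof (rule SS_cong)
    fix p :: pt assume "nonneg p"
    then obtain a c d where p: "p = (a, c, d)" "0 \<le> a" "0 \<le> c" "0 \<le> d" by (cases p) auto
    show "lcomb (tlist (- 2 * int m) (1 - int m) \<kappa>) (wE (int m) \<kappa>) p = s * wO (int m) \<kappa> p"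
      unfolding p(1) s_def by (rule ident1[OF p(2-4)])
  qed
  also have "\<dots> = sm s (RO \<kappa> m)" unfolding RO_def by (rule SS_sm[OF fsupp_wO, symmetric])
  finally have "tel ph E F Ki \<kappa> * tdot_even ph (tel ph E F Ki \<kappa>) m = sm s (RO \<kappa> m)" using h by simp
  thus ?thesis using s0 by (simp add: L_odd s_def[symmetric])
qed

lemma even_step:
  assumes h1: "tdot_even ph (tel ph E F Ki \<kappa>) m = RE \<kappa> m" and h2: "tdot_odd ph (tel ph E F Ki \<kappa>) m = RO \<kappa> m"
  shows "tdot_even ph (tel ph E F Ki \<kappa>) (Suc m) = RE \<kappa> (Suc m)"
proof -
  define s where "s = qint (2 * int m + 1)"
  define r where "r = qint (2 * int m + 2)"
  have r0: "r \<noteq> 0" by (simp add: r_def qint_ne0)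
  define k where "k = - 2 * int m - 1 - 1"
  define \<mu> where "\<mu> = 1 - int m"
  have fs1: "fsupp (lcomb (mlist \<mu>) (wE (int m + 1) \<kappa>))" by (rule fsupp_lcomb[OF fsupp_wE])
  have fs2: "fsupp (lcomb (klist \<mu>) (wE (int m) \<kappa>))" by (rule fsupp_lcomb[OF fsupp_wE])
  have "tel ph E F Ki \<kappa> * RO \<kappa> m = SS k \<mu> (lcomb (tlist (- 2 * int m - 1) (1 - int m) \<kappa>) (wO (int m) \<kappa>))"
    unfolding RO_def tel_eq k_def \<mu>_def by (rule t_SS[OF fsupp_wO nn_wO])
  also have "\<dots> = SS k \<mu> (\<lambda>p. r * lcomb (mlist \<mu>) (wE (int m + 1) \<kappa>) p + s * lcomb (klist \<mu>) (wE (int m) \<kappa>) p)"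
  proof (rule SS_cong)
    fix p :: pt assume "nonneg p"
    then obtain a c d where p: "p = (a, c, d)" "0 \<le> a" "0 \<le> c" "0 \<le> d" by (cases p) auto
    show "lcomb (tlist (- 2 * int m - 1) (1 - int m) \<kappa>) (wO (int m) \<kappa>) p =
       r * lcomb (mlist \<mu>) (wE (int m + 1) \<kappa>) p + s * lcomb (klist \<mu>) (wE (int m) \<kappa>) p"
      unfolding p(1) s_def r_def \<mu>_def by (rule ident2[OF p(2-4)])
  qed
  also have "\<dots> = SS k \<mu> (\<lambda>p. r * lcomb (mlist \<mu>) (wE (int m + 1) \<kappa>) p) + SS k \<mu> (\<lambda>p. s * lcomb (klist \<mu>) (wE (int m) \<kappa>) p)"
    by (rule SS_add[OF fsupp_scale[OF fs1] fsupp_scale[OF fs2], symmetric])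
  also have "\<dots> = sm r (SS k \<mu> (lcomb (mlist \<mu>) (wE (int m + 1) \<kappa>))) + sm s (SS k \<mu> (lcomb (klist \<mu>) (wE (int m) \<kappa>)))"
    by (simp only: SS_sm[OF fs1] SS_sm[OF fs2])
  also have "SS k \<mu> (lcomb (mlist \<mu>) (wE (int m + 1) \<kappa>)) = SS k (\<mu> - 1) (wE (int m + 1) \<kappa>)"
    by (rule m_SS[OF fsupp_wE nn_wE, symmetric])
  also have "SS k \<mu> (lcomb (klist \<mu>) (wE (int m) \<kappa>)) = SS (k + 2) \<mu> (wE (int m) \<kappa>)"
    by (rule k_SS[OF fsupp_wE nn_wE, symmetric])
  also have "SS k (\<mu> - 1) (wE (int m + 1) \<kappa>) = RE \<kappa> (Suc m)"
  proof -
    have "k = - 2 * int (Suc m)" "\<mu> - 1 = 1 - int (Suc m)" "int m + 1 = int (Suc m)" by (simp_all add: k_def \<mu>_def)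
    thus ?thesis unfolding RE_def by (simp only:)
  qed
  also have "SS (k + 2) \<mu> (wE (int m) \<kappa>) = RE \<kappa> m"
    unfolding RE_def k_def \<mu>_def by (simp add: algebra_simps)
  finally have tRO: "tel ph E F Ki \<kappa> * RO \<kappa> m = sm r (RE \<kappa> (Suc m)) + sm s (RE \<kappa> m)" .
  show ?thesis
    unfolding L_even h1 h2 r_def[symmetric] s_def[symmetric] tRO using r0 by simp
qed

lemma main_ind: "tdot_even ph (tel ph E F Ki \<kappa>) m = RE \<kappa> m \<and> tdot_odd ph (tel ph E F Ki \<kappa>) m = RO \<kappa> m"
proof (induction m)
  case 0
  have "RE \<kappa> 0 = 1"
  proof -
    have "RE \<kappa> 0 = Sum_any (\<lambda>p. sm (wE 0 \<kappa> p) (Bx 0 1 p))" by (simp add: RE_def SS_def)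
    also have "\<dots> = sum (\<lambda>p. sm (wE 0 \<kappa> p) (Bx 0 1 p)) {(0, 0, 0)}"
    proof (rule Sum_any.expand_superset)
      show "{p. sm (wE 0 \<kappa> p) (Bx 0 1 p) \<noteq> 0} \<subseteq> {(0, 0, 0)}"
      proof
        fix p assume "p \<in> {p. sm (wE 0 \<kappa> p) (Bx 0 1 p) \<noteq> 0}"
        hence "wE 0 \<kappa> p \<noteq> 0" by auto
        thus "p \<in> {(0, 0, 0)}" by (cases p) (auto simp: wE_def fE_def pdiv_def split: if_splits)
      qed
    qed simp
    also have "\<dots> = 1" using Bx_nat[of 0 1 0 0 0] by (simp add: wE_def fE_def QE_def pdiv_def qfact_def TT_def)
    finally show ?thesis .
  qed
  moreover have "tdot_even ph (tel ph E F Ki \<kappa>) 0 = 1" by (simp add: tdot_even_def tprod_def qfact_def)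
  ultimately have e: "tdot_even ph (tel ph E F Ki \<kappa>) 0 = RE \<kappa> 0" by simp
  thus ?case using odd_step by blast
next
  case (Suc m)
  have e: "tdot_even ph (tel ph E F Ki \<kappa>) (Suc m) = RE \<kappa> (Suc m)" using even_step Suc by blast
  thus ?case using odd_step by blast
qed

end

lemma div2_lemma: "int (2 * c) * (int (2 * c) - 1) div 2 = int c * (2 * int c - 1)"
proof -
  have "int (2 * c) * (int (2 * c) - 1) = 2 * (int c * (2 * int c - 1))" by (simp add: algebra_simps)
  thus ?thesis by simp
qed

lemma nested_sum: "(\<Sum>b\<in>{0..N}. \<Sum>a\<in>{0..b}. \<Sum>c\<in>{0..M::nat}. G b a c) = (\<Sum>(b, a, c)\<in>(SIGMA b:{0..N::nat}. SIGMA a:{0..b}. {0..M}). G b a c)"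
  by (simp add: sum.Sigma)

context urep begin

lemma RE_eq: "RE \<kappa> m = (\<Sum>b\<in>{0..2*m}. \<Sum>a\<in>{0..b}. \<Sum>c\<in>{0..2*m+1}.
              ph (qq powi (int (2*c) * (int (2*c) - 1) div 2 - int b * (2 * int m - int b - 2 * int c)
                             - int a * (int b - int a))
                   * pdiv (2 * int m - int b - 2 * int c) \<kappa>)
              * dpow ph Ec a * hbin ph Ki (1 - int m) c
              * Kpow K Ki (int b - 2 * int m + 2 * int c) * dpow ph F (b - a))"
  (is "_ = (\<Sum>b\<in>_. \<Sum>a\<in>_. \<Sum>c\<in>_. ?g b a c)")
proof -
  define f where "f = (\<lambda>p. sm (wE (int m) \<kappa> p) (Bx (- 2 * int m) (1 - int m) p))"
  define \<phi> :: "nat \<times> nat \<times> nat \<Rightarrow> pt" where "\<phi> = (\<lambda>(b, a, c). (int a, int c, int b - int a))"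
  define I where "I = (SIGMA b:{0..2*m}. SIGMA a:{0..b}. {0..2*m+1})"
  have finI: "finite I" unfolding I_def by auto
  have g_eq: "?g b a c = f (\<phi> (b, a, c))" if "a \<le> b" for a b c
  proof -
    have d: "int b - int a = int (b - a)" using that by simp
    have e1: "qq powi (int (2*c) * (int (2*c) - 1) div 2 - int b * (2 * int m - int b - 2 * int c) - int a * (int b - int a))
        = qp (QE (int m) (int a) (int c) (int (b - a)))"
      unfolding qp_def QE_def div2_lemma d[symmetric] by (simp add: algebra_simps)
    have e2: "pdiv (2 * int m - int b - 2 * int c) \<kappa> = pdiv (2 * int m - int a - int (b - a) - 2 * int c) \<kappa>"
      unfolding d[symmetric] by (simp add: algebra_simps)
    have e3: "int b - 2 * int m + 2 * int c = int a + int (b - a) + 2 * int c + - 2 * int m"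
      unfolding d[symmetric] by simp
    have "?g b a c = sm (qp (QE (int m) (int a) (int c) (int (b - a))) * pdiv (2 * int m - int a - int (b - a) - 2 * int c) \<kappa>)
        (TT (1 - int m) a c (int a + int (b - a) + 2 * int c + - 2 * int m) (b - a))"
      unfolding e1 e2 e3 TT_def sm_def by (simp only: mult.assoc)
    also have "\<dots> = f (\<phi> (b, a, c))"
      unfolding f_def \<phi>_def by (simp only: prod.case d Bx_nat wE_def fE_def of_nat_0_le_iff simp_thms if_True)
    finally show ?thesis .
  qed
  have inj: "inj_on \<phi> I"
  proof (rule inj_onI)
    fix x y assume "x \<in> I" "y \<in> I" "\<phi> x = \<phi> y"
    thus "x = y" by (cases x; cases y) (simp add: \<phi>_def)
  qed
  have supp: "{p. f p \<noteq> 0} \<subseteq> \<phi> ` I"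
  proof
    fix p assume "p \<in> {p. f p \<noteq> 0}"
    hence w: "wE (int m) \<kappa> p \<noteq> 0" by (auto simp: f_def)
    obtain a c d where p: "p = (a, c, d)" by (cases p)
    have c1: "0 \<le> a \<and> 0 \<le> c \<and> 0 \<le> d" using w by (simp add: p wE_def split: if_splits)
    have "pdiv (2 * int m - a - d - 2 * c) \<kappa> \<noteq> 0" using w c1 by (simp add: p wE_def fE_def)
    hence c2: "0 \<le> 2 * int m - a - d - 2 * c" using pdiv_neg[of "2 * int m - a - d - 2 * c" \<kappa>] by linarith
    have h: "0 \<le> a" "0 \<le> c" "0 \<le> d" "0 \<le> 2 * int m - a - d - 2 * c" using c1 c2 by auto
    show "p \<in> \<phi> ` I"
    proof (rule image_eqI[where x = "(nat (a + d), nat a, nat c)"])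
      show "p = \<phi> (nat (a + d), nat a, nat c)" using h by (simp add: p \<phi>_def)
      show "(nat (a + d), nat a, nat c) \<in> I" using h unfolding I_def by auto
    qed
  qed
  have "RE \<kappa> m = Sum_any f" by (simp add: RE_def SS_def f_def)
  also have "\<dots> = sum f (\<phi> ` I)" by (rule Sum_any.expand_superset[OF finite_imageI[OF finI] supp])
  also have "\<dots> = sum (f \<circ> \<phi>) I" by (rule sum.reindex[OF inj])
  also have "\<dots> = sum (\<lambda>(b, a, c). ?g b a c) I"
  proof (rule sum.cong[OF refl])
    fix x assume x: "x \<in> I"
    obtain b a c where xx: "x = (b, a, c)" by (cases x)
    have ab: "a \<le> b" using x by (simp add: I_def xx)
    show "(f \<circ> \<phi>) x = (\<lambda>(b, a, c). ?g b a c) x"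
      by (simp only: xx comp_apply prod.case g_eq[OF ab])
  qed
  also have "\<dots> = (\<Sum>b\<in>{0..2*m}. \<Sum>a\<in>{0..b}. \<Sum>c\<in>{0..2*m+1}. ?g b a c)"
    unfolding I_def by (rule nested_sum[symmetric])
  finally show ?thesis .
qed

lemma RO_eq: "RO \<kappa> m = (\<Sum>b\<in>{0..2*m+1}. \<Sum>a\<in>{0..b}. \<Sum>c\<in>{0..2*m+1}.
              ph (qq powi (int (2*c) * (int (2*c) - 1) div 2 - 2 * int c
                             - int b * (2 * int m - int b - 2 * int c + 1)
                             - int a * (int b - int a))
                   * pdiv (2 * int m - int b - 2 * int c + 1) \<kappa>)
              * dpow ph Ec a * hbin ph Ki (1 - int m) c
              * Kpow K Ki (int b - 2 * int m + 2 * int c - 1) * dpow ph F (b - a))"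
  (is "_ = (\<Sum>b\<in>_. \<Sum>a\<in>_. \<Sum>c\<in>_. ?g b a c)")
proof -
  define f where "f = (\<lambda>p. sm (wO (int m) \<kappa> p) (Bx (- 2 * int m - 1) (1 - int m) p))"
  define \<phi> :: "nat \<times> nat \<times> nat \<Rightarrow> pt" where "\<phi> = (\<lambda>(b, a, c). (int a, int c, int b - int a))"
  define I where "I = (SIGMA b:{0..2*m+1}. SIGMA a:{0..b}. {0..2*m+1})"
  have finI: "finite I" unfolding I_def by auto
  have g_eq: "?g b a c = f (\<phi> (b, a, c))" if "a \<le> b" for a b c
  proof -
    have d: "int b - int a = int (b - a)" using that by simp
    have e1: "qq powi (int (2*c) * (int (2*c) - 1) div 2 - 2 * int c - int b * (2 * int m - int b - 2 * int c + 1) - int a * (int b - int a))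
        = qp (QO (int m) (int a) (int c) (int (b - a)))"
      unfolding qp_def QO_def div2_lemma d[symmetric] by (simp add: algebra_simps)
    have e2: "pdiv (2 * int m - int b - 2 * int c + 1) \<kappa> = pdiv (2 * int m - int a - int (b - a) - 2 * int c + 1) \<kappa>"
      unfolding d[symmetric] by (simp add: algebra_simps)
    have e3: "int b - 2 * int m + 2 * int c - 1 = int a + int (b - a) + 2 * int c + (- 2 * int m - 1)"
      unfolding d[symmetric] by simp
    have "?g b a c = sm (qp (QO (int m) (int a) (int c) (int (b - a))) * pdiv (2 * int m - int a - int (b - a) - 2 * int c + 1) \<kappa>)
        (TT (1 - int m) a c (int a + int (b - a) + 2 * int c + (- 2 * int m - 1)) (b - a))"
      unfolding e1 e2 e3 TT_def sm_def by (simp only: mult.assoc)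
    also have "\<dots> = f (\<phi> (b, a, c))"
      unfolding f_def \<phi>_def by (simp only: prod.case d Bx_nat wO_def fO_def of_nat_0_le_iff simp_thms if_True)
    finally show ?thesis .
  qed
  have inj: "inj_on \<phi> I"
  proof (rule inj_onI)
    fix x y assume "x \<in> I" "y \<in> I" "\<phi> x = \<phi> y"
    thus "x = y" by (cases x; cases y) (simp add: \<phi>_def)
  qed
  have supp: "{p. f p \<noteq> 0} \<subseteq> \<phi> ` I"
  proof
    fix p assume "p \<in> {p. f p \<noteq> 0}"
    hence w: "wO (int m) \<kappa> p \<noteq> 0" by (auto simp: f_def)
    obtain a c d where p: "p = (a, c, d)" by (cases p)
    have c1: "0 \<le> a \<and> 0 \<le> c \<and> 0 \<le> d" using w by (simp add: p wO_def split: if_splits)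
    have "pdiv (2 * int m - a - d - 2 * c + 1) \<kappa> \<noteq> 0" using w c1 by (simp add: p wO_def fO_def)
    hence c2: "0 \<le> 2 * int m - a - d - 2 * c + 1" using pdiv_neg[of "2 * int m - a - d - 2 * c + 1" \<kappa>] by linarith
    have h: "0 \<le> a" "0 \<le> c" "0 \<le> d" "0 \<le> 2 * int m - a - d - 2 * c + 1" using c1 c2 by auto
    show "p \<in> \<phi> ` I"
    proof (rule image_eqI[where x = "(nat (a + d), nat a, nat c)"])
      show "p = \<phi> (nat (a + d), nat a, nat c)" using h by (simp add: p \<phi>_def)
      show "(nat (a + d), nat a, nat c) \<in> I" using h unfolding I_def by auto
    qed
  qed
  have "RO \<kappa> m = Sum_any f" by (simp add: RO_def SS_def f_def)
  also have "\<dots> = sum f (\<phi> ` I)" by (rule Sum_any.expand_superset[OF finite_imageI[OF finI] supp])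
  also have "\<dots> = sum (f \<circ> \<phi>) I" by (rule sum.reindex[OF inj])
  also have "\<dots> = sum (\<lambda>(b, a, c). ?g b a c) I"
  proof (rule sum.cong[OF refl])
    fix x assume x: "x \<in> I"
    obtain b a c where xx: "x = (b, a, c)" by (cases x)
    have ab: "a \<le> b" using x by (simp add: I_def xx)
    show "(f \<circ> \<phi>) x = (\<lambda>(b, a, c). ?g b a c) x"
      by (simp only: xx comp_apply prod.case g_eq[OF ab])
  qed
  also have "\<dots> = (\<Sum>b\<in>{0..2*m+1}. \<Sum>a\<in>{0..b}. \<Sum>c\<in>{0..2*m+1}. ?g b a c)"
    unfolding I_def by (rule nested_sum[symmetric])
  finally show ?thesis .
qed

end

theorem theorem3p3:
  fixes phi :: "qf \<Rightarrow> 'a::ring_1" and E F K Ki :: 'a and l :: int and m :: nat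
  assumes "U_rep phi E F K Ki"
  shows "tdot_even phi (tel phi E F Ki (qint (2 * l))) m =
           (\<Sum>b\<in>{0..2*m}. \<Sum>a\<in>{0..b}. \<Sum>c\<in>{0..2*m+1}.
              phi (qq powi (int (2*c) * (int (2*c) - 1) div 2 - int b * (2 * int m - int b - 2 * int c)
                             - int a * (int b - int a))
                   * pdiv (2 * int m - int b - 2 * int c) (qint (2 * l)))
              * dpow phi (Echeck phi E Ki) a * hbin phi Ki (1 - int m) c
              * Kpow K Ki (int b - 2 * int m + 2 * int c) * dpow phi F (b - a))
       \<and> tdot_odd phi (tel phi E F Ki (qint (2 * l))) m =
           (\<Sum>b\<in>{0..2*m+1}. \<Sum>a\<in>{0..b}. \<Sum>c\<in>{0..2*m+1}.
              phi (qq powi (int (2*c) * (int (2*c) - 1) div 2 - 2 * int c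
                             - int b * (2 * int m - int b - 2 * int c + 1)
                             - int a * (int b - int a))
                   * pdiv (2 * int m - int b - 2 * int c + 1) (qint (2 * l)))
              * dpow phi (Echeck phi E Ki) a * hbin phi Ki (1 - int m) c
              * Kpow K Ki (int b - 2 * int m + 2 * int c - 1) * dpow phi F (b - a))"
proof -
  interpret U: urep phi E F K Ki by (rule urep.intro) (rule assms)
  have "tdot_even phi (tel phi E F Ki (qint (2 * l))) m = U.RE (qint (2 * l)) m
      \<and> tdot_odd phi (tel phi E F Ki (qint (2 * l))) m = U.RO (qint (2 * l)) m"
    by (rule U.main_ind)
  thus ?thesis by (simp only: U.RE_eq U.RO_eq)
qed

end
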